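(* Let $B$ be a finite dimensional C*-algebra of dimension $n\ge4$ with its canonical trace. Let $\mathcal C_B^+$ be the set of arrows of $\mathcal C_B$ which are linear combinations of composable compositions of tensor products of maps of the form $\eta$, $\mu^*$ and $id_1$. Then every arrow of $\mathcal C_B$ is a linear combination of compositions of the form $ab^*$ with $a,b$ arrows in $\mathcal C_B^+$.
   Context: The canonical trace $\tau$ of $B$ is the restriction to $B$ of the normalised trace of $\mathcal L(B)$ via the left regular representation. $B^{\otimes m}$ ($B^{\otimes0}=\mathbb C$) are Hilbert spaces via $\langle x,y\rangle=\tau(y^*x)$; $\mu$ is multiplication, $\eta:\mathbb C\to B$ is $1\mapsto1$, $id_m$ is the identity of $B^{\otimes m}$. $\mathcal C_B$ is the concrete monoidal W*-category with objects $k\in\mathbb N$ (Hilbert space $B^{\otimes k}$) whose morphisms $Hom_{\mathcal C_B}(k,l)\subset\mathcal L(B^{\otimes k},B^{\otimes l})$ are the linear combinations of composable compositions of tensor products of $\eta,\mu,\eta^*,\mu^*,id_m$. *)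

theory Defs
  imports "HOL-Analysis.Analysis"
begin

type_synonym 'N cmat = "complex^'N^'N"

definition cadj :: "('N::finite) cmat \<Rightarrow> 'N cmat" where
  "cadj A = (\<chi> i j. cnj (A $ j $ i))"

definition cscale :: "complex \<Rightarrow> ('N::finite) cmat \<Rightarrow> 'N cmat" where
  "cscale c A = (\<chi> i j. c * A $ i $ j)"

text \<open>B is a unital *-subalgebra of the matrix algebra M_N(C) (hence a finite
  dimensional C*-algebra; every finite dimensional C*-algebra is of this form).\<close>
definition fd_cstar_alg :: "('N::finite) cmat set \<Rightarrow> bool" where
  "fd_cstar_alg B \<longleftrightarrow> 0 \<in> B \<and> mat 1 \<in> B
     \<and> (\<forall>x\<in>B. \<forall>y\<in>B. x + y \<in> B \<and> x ** y \<in> B)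
     \<and> (\<forall>c. \<forall>x\<in>B. cscale c x \<in> B)
     \<and> (\<forall>x\<in>B. cadj x \<in> B)"

definition lincomb :: "('N::finite) cmat list \<Rightarrow> (nat \<Rightarrow> complex) \<Rightarrow> 'N cmat" where
  "lincomb e c = (\<Sum>i<length e. cscale (c i) (e ! i))"

text \<open>e is a (complex linear) basis of B; the dimension of B is length e.\<close>
definition is_basis :: "('N::finite) cmat set \<Rightarrow> 'N cmat list \<Rightarrow> bool" where
  "is_basis B e \<longleftrightarrow> set e \<subseteq> B
     \<and> (\<forall>c. lincomb e c = 0 \<longrightarrow> (\<forall>i<length e. c i = 0))
     \<and> (\<forall>b\<in>B. \<exists>c. lincomb e c = b)"

definition coord :: "('N::finite) cmat list \<Rightarrow> 'N cmat \<Rightarrow> nat \<Rightarrow> complex" where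
  "coord e b = (THE c. (\<forall>i. length e \<le> i \<longrightarrow> c i = 0) \<and> lincomb e c = b)"

text \<open>Canonical trace: normalised trace of the left multiplication operator L_b on B,
  computed in the basis e (the trace of an operator is basis independent).\<close>
definition can_trace :: "('N::finite) cmat list \<Rightarrow> 'N cmat \<Rightarrow> complex" where
  "can_trace e b = (\<Sum>i<length e. coord e (b ** (e ! i)) i) / of_nat (length e)"

definition onb :: "('N::finite) cmat set \<Rightarrow> 'N cmat list \<Rightarrow> bool" where
  "onb B e \<longleftrightarrow> is_basis B e \<and>
     (\<forall>i<length e. \<forall>j<length e.
        can_trace e (cadj (e ! j) ** (e ! i)) = (if i = j then 1 else 0))"

section \<open>Linear maps between tensor powers B^(tensor k), as matrices in the orthonormal
  basis e_{a_1} \<otimes> ... \<otimes> e_{a_k} (indexed by words a over {..<n})\<close>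

definition words :: "nat \<Rightarrow> nat \<Rightarrow> nat list set" where
  "words n k = {w. length w = k \<and> set w \<subseteq> {..<n}}"

text \<open>An arrow is (domain k, codomain l, kernel K) where K y x = <T e_x, e_y>.\<close>
type_synonym arrow = "nat \<times> nat \<times> (nat list \<Rightarrow> nat list \<Rightarrow> complex)"

definition adom :: "arrow \<Rightarrow> nat" where "adom f = fst f"
definition acod :: "arrow \<Rightarrow> nat" where "acod f = fst (snd f)"
definition aker :: "arrow \<Rightarrow> nat list \<Rightarrow> nat list \<Rightarrow> complex" where "aker f = snd (snd f)"

definition mk :: "nat \<Rightarrow> nat \<Rightarrow> nat \<Rightarrow> (nat list \<Rightarrow> nat list \<Rightarrow> complex) \<Rightarrow> arrow" where
  "mk n k l K = (k, l, \<lambda>y x. if y \<in> words n l \<and> x \<in> words n k then K y x else 0)"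

definition acomp :: "nat \<Rightarrow> arrow \<Rightarrow> arrow \<Rightarrow> arrow" where
  "acomp n g f = mk n (adom f) (acod g)
     (\<lambda>y x. \<Sum>z\<in>words n (acod f). aker g y z * aker f z x)"

definition atens :: "nat \<Rightarrow> arrow \<Rightarrow> arrow \<Rightarrow> arrow" where
  "atens n f g = mk n (adom f + adom g) (acod f + acod g)
     (\<lambda>y x. aker f (take (acod f) y) (take (adom f) x) * aker g (drop (acod f) y) (drop (adom f) x))"

definition astar :: "nat \<Rightarrow> arrow \<Rightarrow> arrow" where
  "astar n f = mk n (acod f) (adom f) (\<lambda>y x. cnj (aker f x y))"

definition aadd :: "nat \<Rightarrow> arrow \<Rightarrow> arrow \<Rightarrow> arrow" where
  "aadd n f g = mk n (adom f) (acod f) (\<lambda>y x. aker f y x + aker g y x)"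

definition ascale :: "nat \<Rightarrow> complex \<Rightarrow> arrow \<Rightarrow> arrow" where
  "ascale n c f = mk n (adom f) (acod f) (\<lambda>y x. c * aker f y x)"

definition azero :: "nat \<Rightarrow> nat \<Rightarrow> nat \<Rightarrow> arrow" where
  "azero n k l = mk n k l (\<lambda>_ _. 0)"

definition aid :: "nat \<Rightarrow> nat \<Rightarrow> arrow" where
  "aid n m = mk n m m (\<lambda>y x. if y = x then 1 else 0)"

text \<open>mu : B \<otimes> B \<rightarrow> B (multiplication) and eta : C \<rightarrow> B (1 \<mapsto> 1).\<close>
definition amu :: "('N::finite) cmat list \<Rightarrow> arrow" where
  "amu e = mk (length e) 2 1
     (\<lambda>y x. can_trace e (cadj (e ! (y ! 0)) ** ((e ! (x ! 0)) ** (e ! (x ! 1)))))"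

definition aeta :: "('N::finite) cmat list \<Rightarrow> arrow" where
  "aeta e = mk (length e) 0 1 (\<lambda>y x. can_trace e (cadj (e ! (y ! 0)) ** mat 1))"

inductive_set CB :: "('N::finite) cmat list \<Rightarrow> arrow set" for e where
  eta: "aeta e \<in> CB e"
| mu: "amu e \<in> CB e"
| eta_star: "astar (length e) (aeta e) \<in> CB e"
| mu_star: "astar (length e) (amu e) \<in> CB e"
| ident: "aid (length e) m \<in> CB e"
| comp: "f \<in> CB e \<Longrightarrow> g \<in> CB e \<Longrightarrow> adom g = acod f \<Longrightarrow> acomp (length e) g f \<in> CB e"
| tens: "f \<in> CB e \<Longrightarrow> g \<in> CB e \<Longrightarrow> atens (length e) f g \<in> CB e"
| zero: "azero (length e) k l \<in> CB e"
| add: "f \<in> CB e \<Longrightarrow> g \<in> CB e \<Longrightarrow> adom f = adom g \<Longrightarrow> acod f = acod g \<Longrightarrow> aadd (length e) f g \<in> CB e"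
| scale: "f \<in> CB e \<Longrightarrow> ascale (length e) c f \<in> CB e"

text \<open>C_B^+: linear combinations of composable compositions of tensor products of
  eta, mu* and id_1 (id_0 is the empty tensor product).\<close>
inductive_set CBplus :: "('N::finite) cmat list \<Rightarrow> arrow set" for e where
  eta: "aeta e \<in> CBplus e"
| mu_star: "astar (length e) (amu e) \<in> CBplus e"
| id0: "aid (length e) 0 \<in> CBplus e"
| id1: "aid (length e) 1 \<in> CBplus e"
| comp: "f \<in> CBplus e \<Longrightarrow> g \<in> CBplus e \<Longrightarrow> adom g = acod f \<Longrightarrow> acomp (length e) g f \<in> CBplus e"
| tens: "f \<in> CBplus e \<Longrightarrow> g \<in> CBplus e \<Longrightarrow> atens (length e) f g \<in> CBplus e"
| zero: "azero (length e) k l \<in> CBplus e"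
| add: "f \<in> CBplus e \<Longrightarrow> g \<in> CBplus e \<Longrightarrow> adom f = adom g \<Longrightarrow> acod f = acod g \<Longrightarrow> aadd (length e) f g \<in> CBplus e"
| scale: "f \<in> CBplus e \<Longrightarrow> ascale (length e) c f \<in> CBplus e"

definition lin_comb_ab :: "nat \<Rightarrow> nat \<Rightarrow> nat \<Rightarrow> (complex \<times> arrow \<times> arrow) list \<Rightarrow> arrow" where
  "lin_comb_ab n k l xs =
     foldr (\<lambda>(c, a, b) acc. aadd n (ascale n c (acomp n a (astar n b))) acc) xs (azero n k l)"

end

theory Submission
  imports Defs
begin

lemma words_finite[simp]: "finite (words n k)"
proof -
  have "words n k = {xs. set xs \<subseteq> {..<n} \<and> length xs = k}" unfolding words_def by auto
  thus ?thesis using finite_lists_length_eq[of "{..<n}" k] by simp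
qed

lemma words_0[simp]: "words n 0 = {[]}" unfolding words_def by auto

lemma words_Suc: "words n (Suc k) = (\<lambda>(a,w). a # w) ` ({..<n} \<times> words n k)"
  unfolding words_def by (auto simp: length_Suc_conv)

lemma sum_words_Suc: "(\<Sum>w\<in>words n (Suc k). F w) = (\<Sum>a<n. \<Sum>w\<in>words n k. F (a # w))"
proof -
  have inj: "inj_on (\<lambda>(a,w). a # w) ({..<n} \<times> words n k)" by (auto simp: inj_on_def)
  have "(\<Sum>w\<in>words n (Suc k). F w) = (\<Sum>p\<in>{..<n} \<times> words n k. F ((\<lambda>(a,w). a # w) p))"
    unfolding words_Suc by (rule sum.reindex[OF inj, unfolded comp_def])
  also have "\<dots> = (\<Sum>(a,w)\<in>{..<n} \<times> words n k. F (a # w))"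
    by (rule sum.cong) auto
  also have "\<dots> = (\<Sum>a<n. \<Sum>w\<in>words n k. F (a # w))"
    by (simp add: sum.cartesian_product)
  finally show ?thesis .
qed

lemma words_add: "words n (p + q) = (\<lambda>(u,v). u @ v) ` (words n p \<times> words n q)"
proof
  show "words n (p + q) \<subseteq> (\<lambda>(u,v). u @ v) ` (words n p \<times> words n q)"
  proof
    fix w assume w: "w \<in> words n (p + q)"
    hence "(take p w, drop p w) \<in> words n p \<times> words n q"
      unfolding words_def by (auto dest: in_set_takeD in_set_dropD)
    thus "w \<in> (\<lambda>(u,v). u @ v) ` (words n p \<times> words n q)"
      by (intro image_eqI[of _ _ "(take p w, drop p w)"]) auto
  qed
qed (auto simp: words_def)

lemma sum_words_add: "(\<Sum>w\<in>words n (p + q). F w) = (\<Sum>u\<in>words n p. \<Sum>v\<in>words n q. F (u @ v))"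
proof -
  have inj: "inj_on (\<lambda>(u,v). u @ v) (words n p \<times> words n q)"
    by (auto simp: inj_on_def words_def)
  have "(\<Sum>w\<in>words n (p + q). F w) = (\<Sum>x\<in>words n p \<times> words n q. F ((\<lambda>(u,v). u @ v) x))"
    unfolding words_add by (rule sum.reindex[OF inj, unfolded comp_def])
  also have "\<dots> = (\<Sum>(u,v)\<in>words n p \<times> words n q. F (u @ v))"
    by (rule sum.cong) auto
  also have "\<dots> = (\<Sum>u\<in>words n p. \<Sum>v\<in>words n q. F (u @ v))"
    by (simp add: sum.cartesian_product)
  finally show ?thesis .
qed

lemma take_words[simp]: "y \<in> words n m \<Longrightarrow> take a y \<in> words n (min a m)"
  unfolding words_def by (auto dest: in_set_takeD)
lemma drop_words[simp]: "y \<in> words n m \<Longrightarrow> drop a y \<in> words n (m - a)"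
  unfolding words_def by (auto dest: in_set_dropD)
lemma take_words2: "y \<in> words n (a + b) \<Longrightarrow> take a y \<in> words n a"
  using take_words[of y n "a+b" a] by simp
lemma drop_words2: "y \<in> words n (a + b) \<Longrightarrow> drop a y \<in> words n b"
  using drop_words[of y n "a+b" a] by simp
lemma words_len: "y \<in> words n m \<Longrightarrow> length y = m" unfolding words_def by simp

definition awf :: "nat \<Rightarrow> arrow \<Rightarrow> bool" where
  "awf n f \<longleftrightarrow> (\<forall>y x. aker f y x \<noteq> 0 \<longrightarrow> y \<in> words n (acod f) \<and> x \<in> words n (adom f))"

lemma adom_mk[simp]: "adom (mk n k l K) = k" by (simp add: mk_def adom_def)
lemma acod_mk[simp]: "acod (mk n k l K) = l" by (simp add: mk_def acod_def)
lemma aker_mk[simp]: "aker (mk n k l K) y x = (if y \<in> words n l \<and> x \<in> words n k then K y x else 0)"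
  by (simp add: mk_def aker_def)
lemma awf_mk[simp]: "awf n (mk n k l K)" by (simp add: awf_def)

lemma awf_zero: "awf n f \<Longrightarrow> \<not> (y \<in> words n (acod f) \<and> x \<in> words n (adom f)) \<Longrightarrow> aker f y x = 0"
  unfolding awf_def by blast

lemma arrow_eqI:
  assumes "awf n f" "awf n g" "adom f = adom g" "acod f = acod g"
    and "\<And>y x. y \<in> words n (acod f) \<Longrightarrow> x \<in> words n (adom f) \<Longrightarrow> aker f y x = aker g y x"
  shows "f = g"
proof -
  have k: "aker f = aker g"
  proof (intro ext)
    fix y x
    show "aker f y x = aker g y x"
      using assms awf_zero[OF assms(1), of y x] awf_zero[OF assms(2), of y x] by metis
  qed
  have "f = (adom f, acod f, aker f)" by (simp add: adom_def acod_def aker_def)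
  also have "\<dots> = (adom g, acod g, aker g)" using assms k by simp
  also have "\<dots> = g" by (simp add: adom_def acod_def aker_def)
  finally show ?thesis .
qed

lemma mk_eqI: "awf n f \<Longrightarrow> adom f = k \<Longrightarrow> acod f = l \<Longrightarrow>
   (\<And>y x. y \<in> words n l \<Longrightarrow> x \<in> words n k \<Longrightarrow> K y x = aker f y x) \<Longrightarrow> mk n k l K = f"
  by (rule arrow_eqI[of n]) auto

lemmas ops_defs = acomp_def atens_def astar_def aadd_def ascale_def azero_def aid_def

lemma adom_ops[simp]:
  "adom (acomp n g f) = adom f" "adom (atens n f g) = adom f + adom g" "adom (astar n f) = acod f"
  "adom (aadd n f g) = adom f" "adom (ascale n c f) = adom f" "adom (azero n k l) = k" "adom (aid n m) = m"
  by (simp_all add: ops_defs)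
lemma acod_ops[simp]:
  "acod (acomp n g f) = acod g" "acod (atens n f g) = acod f + acod g" "acod (astar n f) = adom f"
  "acod (aadd n f g) = acod f" "acod (ascale n c f) = acod f" "acod (azero n k l) = l" "acod (aid n m) = m"
  by (simp_all add: ops_defs)
lemma awf_ops[simp]:
  "awf n (acomp n g f)" "awf n (atens n f g)" "awf n (astar n f)"
  "awf n (aadd n f g)" "awf n (ascale n c f)" "awf n (azero n k l)" "awf n (aid n m)"
  by (simp_all add: ops_defs)

lemma aker_ops:
  "aker (acomp n g f) y x = (if y \<in> words n (acod g) \<and> x \<in> words n (adom f) then
      (\<Sum>z\<in>words n (acod f). aker g y z * aker f z x) else 0)"
  "aker (atens n f g) y x = (if y \<in> words n (acod f + acod g) \<and> x \<in> words n (adom f + adom g) then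
      aker f (take (acod f) y) (take (adom f) x) * aker g (drop (acod f) y) (drop (adom f) x) else 0)"
  "aker (astar n f) y x = (if y \<in> words n (adom f) \<and> x \<in> words n (acod f) then cnj (aker f x y) else 0)"
  "aker (aadd n f g) y x = (if y \<in> words n (acod f) \<and> x \<in> words n (adom f) then aker f y x + aker g y x else 0)"
  "aker (ascale n c f) y x = (if y \<in> words n (acod f) \<and> x \<in> words n (adom f) then c * aker f y x else 0)"
  "aker (azero n k l) y x = 0"
  "aker (aid n m) y x = (if y \<in> words n m \<and> x \<in> words n m \<and> y = x then 1 else 0)"
  by (simp_all add: ops_defs)


lemma if01_mult[simp]: "(if P then 1 else 0) * (a::complex) = (if P then a else 0)"
  "a * (if P then 1 else 0) = (if P then a else 0)" by simp_all


lemma acomp_assoc: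
  assumes "adom g = acod f"
  shows "acomp n h (acomp n g f) = acomp n (acomp n h g) f"
proof (rule arrow_eqI[of n])
  fix y x assume y: "y \<in> words n (acod (acomp n h (acomp n g f)))"
    and x: "x \<in> words n (adom (acomp n h (acomp n g f)))"
  have "aker (acomp n h (acomp n g f)) y x
     = (\<Sum>z\<in>words n (acod g). \<Sum>w\<in>words n (acod f). aker h y z * (aker g z w * aker f w x))"
    using y x by (simp add: aker_ops sum_distrib_left)
  also have "\<dots> = (\<Sum>w\<in>words n (acod f). \<Sum>z\<in>words n (acod g). aker h y z * aker g z w * aker f w x)"
    by (subst sum.swap) (simp add: mult.assoc)
  also have "\<dots> = aker (acomp n (acomp n h g) f) y x"
    using y x assms by (simp add: aker_ops sum_distrib_right)
  finally show "aker (acomp n h (acomp n g f)) y x = aker (acomp n (acomp n h g) f) y x" .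
qed simp_all

lemma acomp_id_left:
  assumes "awf n f" "acod f = m"
  shows "acomp n (aid n m) f = f"
proof (rule arrow_eqI[of n])
  fix y x assume y: "y \<in> words n (acod (acomp n (aid n m) f))"
    and x: "x \<in> words n (adom (acomp n (aid n m) f))"
  have "aker (acomp n (aid n m) f) y x = (\<Sum>z\<in>words n m. if z = y then aker f z x else 0)"
    using y x assms by (auto simp: aker_ops sum.delta sum.delta' intro!: sum.cong)
  also have "\<dots> = aker f y x" using y by (simp add: sum.delta)
  finally show "aker (acomp n (aid n m) f) y x = aker f y x" .
qed (use assms in simp_all)

lemma acomp_id_right:
  assumes "awf n f" "adom f = m"
  shows "acomp n f (aid n m) = f"
proof (rule arrow_eqI[of n])
  fix y x assume y: "y \<in> words n (acod (acomp n f (aid n m)))"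
    and x: "x \<in> words n (adom (acomp n f (aid n m)))"
  have "aker (acomp n f (aid n m)) y x = (\<Sum>z\<in>words n m. if z = x then aker f y z else 0)"
    using y x assms by (auto simp: aker_ops sum.delta sum.delta' intro!: sum.cong)
  also have "\<dots> = aker f y x" using x by (simp add: sum.delta)
  finally show "aker (acomp n f (aid n m)) y x = aker f y x" .
qed (use assms in simp_all)

lemma atens_assoc: "atens n (atens n f g) h = atens n f (atens n g h)"
proof (rule arrow_eqI[of n])
  fix y x assume y: "y \<in> words n (acod (atens n (atens n f g) h))"
    and x: "x \<in> words n (adom (atens n (atens n f g) h))"
  define a where "a = acod f" define b where "b = acod g" define c where "c = acod h"
  define a' where "a' = adom f" define b' where "b' = adom g" define c' where "c' = adom h"
  have yw: "y \<in> words n (a + b + c)" using y by (simp add: a_def b_def c_def)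
  have xw: "x \<in> words n (a' + b' + c')" using x by (simp add: a'_def b'_def c'_def)
  have y1: "take (a + b) y \<in> words n (a + b)" using yw by (rule take_words2)
  have x1: "take (a' + b') x \<in> words n (a' + b')" using xw by (rule take_words2)
  have y2: "drop a y \<in> words n (b + c)" using yw by (simp add: drop_words2 add.assoc)
  have x2: "drop a' x \<in> words n (b' + c')" using xw by (simp add: drop_words2 add.assoc)
  have yw': "y \<in> words n (a + (b + c))" using yw by (simp add: add.assoc)
  have xw': "x \<in> words n (a' + (b' + c'))" using xw by (simp add: add.assoc)
  have t1: "take a (take (a + b) y) = take a y" "take a' (take (a' + b') x) = take a' x" by (simp_all add: min_def)
  have t2: "drop a (take (a + b) y) = take b (drop a y)" "drop a' (take (a' + b') x) = take b' (drop a' x)"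
    by (simp_all add: drop_take)
  have t3: "drop b (drop a y) = drop (a + b) y" "drop b' (drop a' x) = drop (a' + b') x"
    by (simp_all add: add.commute)
  have "aker (atens n (atens n f g) h) y x =
      aker f (take a y) (take a' x) * aker g (take b (drop a y)) (take b' (drop a' x)) *
      aker h (drop (a + b) y) (drop (a' + b') x)"
    using yw xw y1 x1 unfolding aker_ops(2) adom_ops acod_ops a_def[symmetric] b_def[symmetric]
      c_def[symmetric] a'_def[symmetric] b'_def[symmetric] c'_def[symmetric] t1 t2 by simp
  also have "\<dots> = aker (atens n f (atens n g h)) y x"
    using yw' xw' y2 x2 unfolding aker_ops(2) adom_ops acod_ops a_def[symmetric] b_def[symmetric]
      c_def[symmetric] a'_def[symmetric] b'_def[symmetric] c'_def[symmetric] t3 by simp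
  finally show "aker (atens n (atens n f g) h) y x = aker (atens n f (atens n g h)) y x" .
qed (simp_all add: add.assoc)
lemma atens_id0_left: "awf n f \<Longrightarrow> atens n (aid n 0) f = f"
  by (rule arrow_eqI[of n]) (simp_all add: aker_ops)

lemma atens_id0_right: "awf n f \<Longrightarrow> atens n f (aid n 0) = f"
  by (rule arrow_eqI[of n]) (simp_all add: aker_ops words_len)

lemma aid_tens: "atens n (aid n p) (aid n q) = aid n (p + q)"
proof (rule arrow_eqI[of n])
  fix y x assume y: "y \<in> words n (acod (atens n (aid n p) (aid n q)))"
    and x: "x \<in> words n (adom (atens n (aid n p) (aid n q)))"
  have "(take p y = take p x \<and> drop p y = drop p x) = (y = x)"
    by (metis append_take_drop_id)
  thus "aker (atens n (aid n p) (aid n q)) y x = aker (aid n (p + q)) y x"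
    using y x by (auto simp: aker_ops take_words2 drop_words2)
qed simp_all

lemma interchange:
  assumes "adom f = acod h" "adom g = acod k"
  shows "acomp n (atens n f g) (atens n h k) = atens n (acomp n f h) (acomp n g k)"
proof (rule arrow_eqI[of n])
  fix y x assume y: "y \<in> words n (acod (acomp n (atens n f g) (atens n h k)))"
    and x: "x \<in> words n (adom (acomp n (atens n f g) (atens n h k)))"
  have "aker (acomp n (atens n f g) (atens n h k)) y x
      = (\<Sum>u\<in>words n (acod h). \<Sum>v\<in>words n (acod k).
          (aker f (take (acod f) y) u * aker g (drop (acod f) y) v) *
          (aker h u (take (adom h) x) * aker k v (drop (adom h) x)))"
    using y x assms by (simp add: aker_ops sum_words_add words_len cong: sum.cong)
  also have "\<dots> = (\<Sum>u\<in>words n (acod h). aker f (take (acod f) y) u * aker h u (take (adom h) x)) *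
                  (\<Sum>v\<in>words n (acod k). aker g (drop (acod f) y) v * aker k v (drop (adom h) x))"
    by (simp add: sum_product mult_ac)
  also have "\<dots> = aker (atens n (acomp n f h) (acomp n g k)) y x"
    using y x assms by (simp add: aker_ops take_words2 drop_words2)
  finally show "aker (acomp n (atens n f g) (atens n h k)) y x = aker (atens n (acomp n f h) (acomp n g k)) y x" .
qed simp_all

lemma astar_astar: "awf n f \<Longrightarrow> astar n (astar n f) = f"
  by (rule arrow_eqI[of n]) (simp_all add: aker_ops)

lemma astar_comp: "adom g = acod f \<Longrightarrow> astar n (acomp n g f) = acomp n (astar n f) (astar n g)"
  by (rule arrow_eqI[of n]) (simp_all add: aker_ops mult.commute)

lemma astar_tens: "astar n (atens n f g) = atens n (astar n f) (astar n g)"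
  by (rule arrow_eqI[of n]) (auto simp: aker_ops take_words2 drop_words2)

lemma astar_id: "astar n (aid n m) = aid n m"
  by (rule arrow_eqI[of n]) (auto simp: aker_ops)

lemma astar_add: "adom f = adom g \<Longrightarrow> acod f = acod g \<Longrightarrow> astar n (aadd n f g) = aadd n (astar n f) (astar n g)"
  by (rule arrow_eqI[of n]) (auto simp: aker_ops)

lemma astar_scale: "astar n (ascale n c f) = ascale n (cnj c) (astar n f)"
  by (rule arrow_eqI[of n]) (auto simp: aker_ops)

lemma astar_zero: "astar n (azero n k l) = azero n l k"
  by (rule arrow_eqI[of n]) (auto simp: aker_ops)

lemma acomp_add_left:
  assumes "adom g1 = acod f" "adom g2 = acod f" "acod g1 = acod g2"
  shows "acomp n (aadd n g1 g2) f = aadd n (acomp n g1 f) (acomp n g2 f)"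
  by (rule arrow_eqI[of n]) (use assms in \<open>auto simp: aker_ops sum.distrib distrib_right intro!: sum.cong\<close>)

lemma acomp_add_right:
  assumes "adom g = acod f1" "adom f1 = adom f2" "acod f1 = acod f2"
  shows "acomp n g (aadd n f1 f2) = aadd n (acomp n g f1) (acomp n g f2)"
  by (rule arrow_eqI[of n]) (use assms in \<open>auto simp: aker_ops sum.distrib distrib_left intro!: sum.cong\<close>)

lemma acomp_scale_left:
  assumes "adom g = acod f"
  shows "acomp n (ascale n c g) f = ascale n c (acomp n g f)"
  by (rule arrow_eqI[of n]) (use assms in \<open>auto simp: aker_ops sum_distrib_left mult.assoc intro!: sum.cong\<close>)

lemma acomp_scale_right:
  assumes "adom g = acod f"
  shows "acomp n g (ascale n c f) = ascale n c (acomp n g f)"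
  by (rule arrow_eqI[of n]) (use assms in \<open>auto simp: aker_ops sum_distrib_left mult_ac intro!: sum.cong\<close>)

lemma acomp_zero_left: "acomp n (azero n k l) f = azero n (adom f) l"
  by (rule arrow_eqI[of n]) (auto simp: aker_ops)

lemma acomp_zero_right: "acomp n g (azero n k l) = azero n k (acod g)"
  by (rule arrow_eqI[of n]) (auto simp: aker_ops)

lemma atens_add_left:
  assumes "adom f1 = adom f2" "acod f1 = acod f2"
  shows "atens n (aadd n f1 f2) g = aadd n (atens n f1 g) (atens n f2 g)"
  by (rule arrow_eqI[of n]) (use assms in \<open>auto simp: aker_ops take_words2 drop_words2 distrib_right\<close>)

lemma atens_add_right:
  assumes "adom g1 = adom g2" "acod g1 = acod g2"
  shows "atens n f (aadd n g1 g2) = aadd n (atens n f g1) (atens n f g2)"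
  by (rule arrow_eqI[of n]) (use assms in \<open>auto simp: aker_ops take_words2 drop_words2 distrib_left\<close>)

lemma atens_scale_left: "atens n (ascale n c f) g = ascale n c (atens n f g)"
  by (rule arrow_eqI[of n]) (auto simp: aker_ops take_words2 drop_words2)

lemma atens_scale_right: "atens n f (ascale n c g) = ascale n c (atens n f g)"
  by (rule arrow_eqI[of n]) (auto simp: aker_ops take_words2 drop_words2)

lemma atens_zero_left: "atens n (azero n k l) g = azero n (k + adom g) (l + acod g)"
  by (rule arrow_eqI[of n]) (auto simp: aker_ops)

lemma atens_zero_right: "atens n f (azero n k l) = azero n (adom f + k) (acod f + l)"
  by (rule arrow_eqI[of n]) (auto simp: aker_ops)



inductive_set lspan :: "nat \<Rightarrow> arrow set \<Rightarrow> nat \<Rightarrow> nat \<Rightarrow> arrow set" for n A k l where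
  base: "a \<in> A \<Longrightarrow> adom a = k \<Longrightarrow> acod a = l \<Longrightarrow> awf n a \<Longrightarrow> a \<in> lspan n A k l"
| zero: "azero n k l \<in> lspan n A k l"
| add: "f \<in> lspan n A k l \<Longrightarrow> g \<in> lspan n A k l \<Longrightarrow> aadd n f g \<in> lspan n A k l"
| scale: "f \<in> lspan n A k l \<Longrightarrow> ascale n c f \<in> lspan n A k l"

lemma lspan_ty: "f \<in> lspan n A k l \<Longrightarrow> adom f = k \<and> acod f = l \<and> awf n f"
  by (induct rule: lspan.induct) auto

lemma lspan_map:
  assumes "f \<in> lspan n A k l"
    and "\<And>a. a \<in> A \<Longrightarrow> adom a = k \<Longrightarrow> acod a = l \<Longrightarrow> awf n a \<Longrightarrow> \<phi> a \<in> lspan n A' k' l'"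
    and "\<phi> (azero n k l) \<in> lspan n A' k' l'"
    and "\<And>f g. adom f = k \<Longrightarrow> acod f = l \<Longrightarrow> awf n f \<Longrightarrow> adom g = k \<Longrightarrow> acod g = l \<Longrightarrow> awf n g
          \<Longrightarrow> \<phi> (aadd n f g) = aadd n (\<phi> f) (\<phi> g)"
    and "\<And>c f. adom f = k \<Longrightarrow> acod f = l \<Longrightarrow> awf n f \<Longrightarrow> \<exists>c'. \<phi> (ascale n c f) = ascale n c' (\<phi> f)"
  shows "\<phi> f \<in> lspan n A' k' l'"
  using assms(1)
proof induct
  case (base a) thus ?case using assms(2) by blast
next
  case zero thus ?case using assms(3) by blast
next
  case (add f g)
  thus ?case using assms(4) lspan_ty[OF add(1)] lspan_ty[OF add(3)] by (simp add: lspan.add)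
next
  case (scale f c)
  then obtain c' where "\<phi> (ascale n c f) = ascale n c' (\<phi> f)" using assms(5) lspan_ty[OF scale(1)] by blast
  thus ?case using scale by (simp add: lspan.scale)
qed

lemma lspan_comp:
  assumes f: "f \<in> lspan n A k l" and L: "adom L = l" and R: "acod R = k"
    and h: "\<And>a. a \<in> A \<Longrightarrow> adom a = k \<Longrightarrow> acod a = l \<Longrightarrow> awf n a \<Longrightarrow> acomp n (acomp n L a) R \<in> lspan n A' (adom R) (acod L)"
  shows "acomp n (acomp n L f) R \<in> lspan n A' (adom R) (acod L)"
proof (rule lspan_map[OF f, where \<phi> = "\<lambda>z. acomp n (acomp n L z) R"])
  show "acomp n (acomp n L (azero n k l)) R \<in> lspan n A' (adom R) (acod L)"
    by (simp add: acomp_zero_right acomp_zero_left lspan.zero)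
next
  fix f g assume *: "adom f = k" "acod f = l" "awf n f" "adom g = k" "acod g = l" "awf n g"
  show "acomp n (acomp n L (aadd n f g)) R = aadd n (acomp n (acomp n L f) R) (acomp n (acomp n L g) R)"
    using * L R by (simp add: acomp_add_right acomp_add_left)
next
  fix c f assume *: "adom f = k" "acod f = l" "awf n f"
  show "\<exists>c'. acomp n (acomp n L (ascale n c f)) R = ascale n c' (acomp n (acomp n L f) R)"
    using * L R by (auto simp: acomp_scale_right acomp_scale_left)
qed (use h in auto)

lemma lspan_left:
  assumes f: "f \<in> lspan n A k l" and L: "adom L = l"
    and h: "\<And>a. a \<in> A \<Longrightarrow> adom a = k \<Longrightarrow> acod a = l \<Longrightarrow> awf n a \<Longrightarrow> acomp n L a \<in> lspan n A' k (acod L)"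
  shows "acomp n L f \<in> lspan n A' k (acod L)"
proof -
  have "acomp n (acomp n L f) (aid n k) \<in> lspan n A' (adom (aid n k)) (acod L)"
    by (rule lspan_comp[OF f L]) (use h in \<open>auto simp: acomp_id_right\<close>)
  thus ?thesis using lspan_ty[OF f] by (simp add: acomp_id_right)
qed

lemma lspan_right:
  assumes f: "f \<in> lspan n A k l" and R: "acod R = k"
    and h: "\<And>a. a \<in> A \<Longrightarrow> adom a = k \<Longrightarrow> acod a = l \<Longrightarrow> awf n a \<Longrightarrow> acomp n a R \<in> lspan n A' (adom R) l"
  shows "acomp n f R \<in> lspan n A' (adom R) l"
proof -
  have "acomp n (acomp n (aid n l) f) R \<in> lspan n A' (adom R) (acod (aid n l))"
    by (rule lspan_comp[OF f _ R]) (use h in \<open>auto simp: acomp_id_left\<close>)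
  thus ?thesis using lspan_ty[OF f] by (simp add: acomp_id_left)
qed

lemma lspan_star:
  assumes "f \<in> lspan n A k l" shows "astar n f \<in> lspan n (astar n ` A) l k"
  using assms
proof induct
  case (base a) thus ?case by (intro lspan.base) auto
next
  case zero thus ?case by (simp add: astar_zero lspan.zero)
next
  case (add f g) thus ?case using lspan_ty[OF add(1)] lspan_ty[OF add(3)] by (simp add: astar_add lspan.add)
next
  case (scale f c) thus ?case by (simp add: astar_scale lspan.scale)
qed

lemma lspan_tens_left:
  assumes f: "f \<in> lspan n A k l"
    and h: "\<And>a. a \<in> A \<Longrightarrow> adom a = k \<Longrightarrow> acod a = l \<Longrightarrow> awf n a \<Longrightarrow> atens n a G \<in> lspan n A' (k + adom G) (l + acod G)"
  shows "atens n f G \<in> lspan n A' (k + adom G) (l + acod G)"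
  by (rule lspan_map[OF f, where \<phi> = "\<lambda>z. atens n z G"])
     (use h in \<open>auto simp: atens_zero_left atens_add_left atens_scale_left lspan.zero\<close>)

lemma lspan_tens_right:
  assumes f: "f \<in> lspan n A k l"
    and h: "\<And>a. a \<in> A \<Longrightarrow> adom a = k \<Longrightarrow> acod a = l \<Longrightarrow> awf n a \<Longrightarrow> atens n G a \<in> lspan n A' (adom G + k) (acod G + l)"
  shows "atens n G f \<in> lspan n A' (adom G + k) (acod G + l)"
  by (rule lspan_map[OF f, where \<phi> = "\<lambda>z. atens n G z"])
     (use h in \<open>auto simp: atens_zero_right atens_add_right atens_scale_right lspan.zero\<close>)

lemma lspan_sub:
  assumes f: "f \<in> lspan n A k l"
    and h: "\<And>a. a \<in> A \<Longrightarrow> adom a = k \<Longrightarrow> acod a = l \<Longrightarrow> awf n a \<Longrightarrow> a \<in> lspan n A' k l"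
  shows "f \<in> lspan n A' k l"
proof (rule lspan_map[OF f, where \<phi> = "\<lambda>z. z"])
  fix a assume "a \<in> A" "adom a = k" "acod a = l" "awf n a" thus "a \<in> lspan n A' k l" by (rule h)
qed (auto intro: lspan.zero)

lemma lspan_eq: "a \<in> lspan n A k l \<Longrightarrow> b = a \<Longrightarrow> b \<in> lspan n A k l" by simp

lemma aadd_zero_left: "awf n g \<Longrightarrow> adom g = k \<Longrightarrow> acod g = l \<Longrightarrow> aadd n (azero n k l) g = g"
  by (rule arrow_eqI[of n]) (auto simp: aker_ops)

lemma aadd_assoc: "adom f = adom g \<Longrightarrow> acod f = acod g \<Longrightarrow> adom g = adom h \<Longrightarrow> acod g = acod h \<Longrightarrow>
  aadd n f (aadd n g h) = aadd n (aadd n f g) h"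
  by (rule arrow_eqI[of n]) (auto simp: aker_ops)

definition lcterm :: "nat \<Rightarrow> complex \<times> arrow \<times> arrow \<Rightarrow> arrow" where
  "lcterm n t = (case t of (c, a, b) \<Rightarrow> ascale n c (acomp n a (astar n b)))"

lemma lin_comb_ab_Cons: "lin_comb_ab n k l (t # xs) = aadd n (lcterm n t) (lin_comb_ab n k l xs)"
  by (cases t) (simp add: lin_comb_ab_def lcterm_def)
lemma lin_comb_ab_Nil: "lin_comb_ab n k l [] = azero n k l"
  by (simp add: lin_comb_ab_def)

definition tyok :: "nat \<Rightarrow> nat \<Rightarrow> (complex \<times> arrow \<times> arrow) list \<Rightarrow> bool" where
  "tyok k l xs \<longleftrightarrow> (\<forall>(c, a, b) \<in> set xs. acod a = l \<and> acod b = k)"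

lemma lcterm_ty: "acod a = l \<Longrightarrow> acod b = k \<Longrightarrow> adom (lcterm n (c,a,b)) = k \<and> acod (lcterm n (c,a,b)) = l"
  by (simp add: lcterm_def)

lemma lc_ty: "tyok k l xs \<Longrightarrow> adom (lin_comb_ab n k l xs) = k \<and> acod (lin_comb_ab n k l xs) = l \<and> awf n (lin_comb_ab n k l xs)"
proof (induct xs)
  case Nil thus ?case by (simp add: lin_comb_ab_Nil)
next
  case (Cons t xs) thus ?case by (cases t) (auto simp: lin_comb_ab_Cons lcterm_def tyok_def)
qed

lemma lc_append: "tyok k l xs \<Longrightarrow> tyok k l ys \<Longrightarrow>
   lin_comb_ab n k l (xs @ ys) = aadd n (lin_comb_ab n k l xs) (lin_comb_ab n k l ys)"
proof (induct xs)
  case Nil thus ?case using lc_ty[OF Nil(2), of n] by (simp add: lin_comb_ab_Nil aadd_zero_left)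
next
  case (Cons t xs)
  obtain c a b where t: "t = (c, a, b)" by (cases t)
  have tx: "tyok k l xs" using Cons(2) by (simp add: tyok_def)
  have ab: "acod a = l" "acod b = k" using Cons(2) t by (auto simp: tyok_def)
  show ?case using Cons(1)[OF tx Cons(3)] lc_ty[OF tx, of n] lc_ty[OF Cons(3), of n] lcterm_ty[OF ab, of n c]
    by (simp add: lin_comb_ab_Cons t aadd_assoc)
qed

lemma ascale_aadd: "adom f = adom g \<Longrightarrow> acod f = acod g \<Longrightarrow> ascale n c (aadd n f g) = aadd n (ascale n c f) (ascale n c g)"
  by (rule arrow_eqI[of n]) (auto simp: aker_ops distrib_left)
lemma ascale_ascale: "ascale n c (ascale n d f) = ascale n (c * d) f"
  by (rule arrow_eqI[of n]) (auto simp: aker_ops)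
lemma ascale_zero: "ascale n c (azero n k l) = azero n k l"
  by (rule arrow_eqI[of n]) (auto simp: aker_ops)

lemma lc_scale: "tyok k l xs \<Longrightarrow>
   ascale n s (lin_comb_ab n k l xs) = lin_comb_ab n k l (map (\<lambda>(c, a, b). (s * c, a, b)) xs)"
proof (induct xs)
  case Nil thus ?case by (simp add: lin_comb_ab_Nil ascale_zero)
next
  case (Cons t xs)
  obtain c a b where t: "t = (c, a, b)" by (cases t)
  have tx: "tyok k l xs" using Cons(2) by (simp add: tyok_def)
  have ab: "acod a = l" "acod b = k" using Cons(2) t by (auto simp: tyok_def)
  show ?case using Cons(1)[OF tx] lc_ty[OF tx, of n] lcterm_ty[OF ab, of n c]
    by (simp add: lin_comb_ab_Cons t ascale_aadd) (simp add: lcterm_def ascale_ascale)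
qed

lemma lspan_to_list:
  assumes "f \<in> lspan n {acomp n a (astar n b) | a b. P a b} k l"
  shows "\<exists>xs. (\<forall>(c, a, b) \<in> set xs. P a b \<and> acod a = l \<and> acod b = k) \<and> f = lin_comb_ab n k l xs"
  using assms
proof induct
  case (base g)
  then obtain a b where g: "g = acomp n a (astar n b)" "P a b" by blast
  have "lin_comb_ab n k l [(1, a, b)] = g"
    using base g by (intro arrow_eqI[of n]) (auto simp: lin_comb_ab_Cons lin_comb_ab_Nil lcterm_def aker_ops)
  thus ?case using g base by (intro exI[of _ "[(1, a, b)]"]) auto
next
  case zero thus ?case by (intro exI[of _ "[]"]) (simp add: lin_comb_ab_Nil)
next
  case (add f g)
  then obtain xs ys where xs: "\<forall>(c, a, b) \<in> set xs. P a b \<and> acod a = l \<and> acod b = k" "f = lin_comb_ab n k l xs"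
    and ys: "\<forall>(c, a, b) \<in> set ys. P a b \<and> acod a = l \<and> acod b = k" "g = lin_comb_ab n k l ys" by blast
  have "tyok k l xs" "tyok k l ys" using xs ys by (auto simp: tyok_def)
  thus ?case using xs ys by (intro exI[of _ "xs @ ys"]) (auto simp: lc_append)
next
  case (scale f s)
  then obtain xs where xs: "\<forall>(c, a, b) \<in> set xs. P a b \<and> acod a = l \<and> acod b = k" "f = lin_comb_ab n k l xs" by blast
  have "tyok k l xs" using xs by (auto simp: tyok_def)
  thus ?case using xs by (intro exI[of _ "map (\<lambda>(c, a, b). (s * c, a, b)) xs"]) (auto simp: lc_scale)
qed


lemma cadj_mult: "cadj (A ** B) = cadj B ** cadj (A :: ('N::finite) cmat)"
  by (simp add: cadj_def matrix_matrix_mult_def vec_eq_iff mult.commute)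

lemma madd_mult: "(A + B) ** C = A ** C + B ** (C :: ('N::finite) cmat)"
  by (simp add: matrix_matrix_mult_def vec_eq_iff distrib_right sum.distrib)

lemma cadj_cadj[simp]: "cadj (cadj A) = A"
  by (simp add: cadj_def vec_eq_iff)

lemma cadj_one[simp]: "cadj (mat 1 :: ('N::finite) cmat) = mat 1"
  by (simp add: cadj_def mat_def vec_eq_iff)

lemma cadj_add: "cadj (A + B) = cadj A + cadj (B :: ('N::finite) cmat)"
  by (simp add: cadj_def vec_eq_iff)

lemma cadj_scale: "cadj (cscale c A) = cscale (cnj c) (cadj (A :: ('N::finite) cmat))"
  by (simp add: cadj_def cscale_def vec_eq_iff)

lemma cadj_sum: "cadj (\<Sum>s\<in>S. f s) = (\<Sum>s\<in>S. cadj (f s :: ('N::finite) cmat))"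
  by (simp add: cadj_def vec_eq_iff)

lemma cscale_mult_left: "cscale c A ** B = cscale c (A ** B :: ('N::finite) cmat)"
  by (simp add: cscale_def matrix_matrix_mult_def vec_eq_iff sum_distrib_left mult.assoc)

lemma cscale_mult_right: "A ** cscale c B = cscale c (A ** B :: ('N::finite) cmat)"
  by (simp add: cscale_def matrix_matrix_mult_def vec_eq_iff sum_distrib_left mult_ac)

lemma sum_mult_left: "(\<Sum>s\<in>S. f s) ** B = (\<Sum>s\<in>S. f s ** B :: ('N::finite) cmat)"
  by (simp add: matrix_matrix_mult_def vec_eq_iff sum_distrib_right, intro allI, rule sum.swap)

lemma sum_mult_right: "A ** (\<Sum>s\<in>S. f s) = (\<Sum>s\<in>S. A ** f s :: ('N::finite) cmat)"
  by (simp add: matrix_matrix_mult_def vec_eq_iff sum_distrib_left, intro allI, rule sum.swap)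

lemma cscale_add: "cscale c (A + B) = cscale c A + cscale c (B :: ('N::finite) cmat)"
  by (simp add: cscale_def vec_eq_iff distrib_left)

lemma cscale_add2: "cscale (c + d) A = cscale c A + cscale d (A :: ('N::finite) cmat)"
  by (simp add: cscale_def vec_eq_iff distrib_right)

lemma cscale_cscale: "cscale c (cscale d A) = cscale (c * d) (A :: ('N::finite) cmat)"
  by (simp add: cscale_def vec_eq_iff mult.assoc)

lemma cscale_sum: "cscale c (\<Sum>s\<in>S. f s) = (\<Sum>s\<in>S. cscale c (f s :: ('N::finite) cmat))"
  by (simp add: cscale_def vec_eq_iff sum_distrib_left)

lemma cscale_0[simp]: "cscale 0 A = (0 :: ('N::finite) cmat)"
  by (simp add: cscale_def vec_eq_iff)

lemma cscale_1[simp]: "cscale 1 A = (A :: ('N::finite) cmat)"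
  by (simp add: cscale_def vec_eq_iff)

lemma cscale_diff: "cscale (c - d) A = cscale c A - cscale d (A :: ('N::finite) cmat)"
  by (simp add: cscale_def vec_eq_iff left_diff_distrib)

locale fb =
  fixes B :: "('N::finite) cmat set" and e :: "'N cmat list"
  assumes alg: "fd_cstar_alg B" and onbB: "onb B e" and npos: "0 < length e"
begin

abbreviation "t \<equiv> can_trace e"
abbreviation "E i \<equiv> e ! i"
abbreviation "S i \<equiv> cadj (e ! i)"

lemma B0: "0 \<in> B" and B1: "mat 1 \<in> B" and Badd: "x \<in> B \<Longrightarrow> y \<in> B \<Longrightarrow> x + y \<in> B"
  and Bmult: "x \<in> B \<Longrightarrow> y \<in> B \<Longrightarrow> x ** y \<in> B" and Bscale: "x \<in> B \<Longrightarrow> cscale c x \<in> B"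
  and Badj: "x \<in> B \<Longrightarrow> cadj x \<in> B"
  using alg unfolding fd_cstar_alg_def by auto

lemma Bsum: "(\<And>s. s \<in> A \<Longrightarrow> f s \<in> B) \<Longrightarrow> (\<Sum>s\<in>A. f s) \<in> B"
proof (induct A rule: infinite_finite_induct)
  case (insert x F) thus ?case by (simp add: Badd)
qed (simp_all add: B0)

lemma basis: "is_basis B e" using onbB unfolding onb_def by simp
lemma orth: "i < length e \<Longrightarrow> j < length e \<Longrightarrow> t (S j ** E i) = (if i = j then 1 else 0)"
  using onbB unfolding onb_def by simp

lemma EB: "i < length e \<Longrightarrow> E i \<in> B" using basis unfolding is_basis_def by auto
lemma SB: "i < length e \<Longrightarrow> S i \<in> B" using EB Badj by auto

lemma lincomb_diff: "lincomb e (\<lambda>i. c i - d i) = lincomb e c - lincomb e d"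
  by (simp add: lincomb_def cscale_diff sum_subtractf)

lemma lincomb_add: "lincomb e (\<lambda>i. c i + d i) = lincomb e c + lincomb e d"
  by (simp add: lincomb_def cscale_add2 sum.distrib)

lemma lincomb_scale: "lincomb e (\<lambda>i. a * c i) = cscale a (lincomb e c)"
  by (simp add: lincomb_def cscale_sum cscale_cscale)

lemma lincomb_uniq: "lincomb e c = lincomb e d \<Longrightarrow> i < length e \<Longrightarrow> c i = d i"
proof -
  assume "lincomb e c = lincomb e d" "i < length e"
  hence "lincomb e (\<lambda>i. c i - d i) = 0" by (simp add: lincomb_diff)
  hence "\<forall>i<length e. c i - d i = 0" using basis unfolding is_basis_def by blast
  thus "c i = d i" using \<open>i < length e\<close> by simp
qed

lemma coord_spec: assumes "b \<in> B"
  shows "(\<forall>i. length e \<le> i \<longrightarrow> coord e b i = 0) \<and> lincomb e (coord e b) = b"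
proof -
  obtain c where c: "lincomb e c = b" using basis assms unfolding is_basis_def by blast
  define c' where "c' i = (if i < length e then c i else 0)" for i
  have c': "lincomb e c' = b" using c unfolding lincomb_def c'_def by (auto intro!: sum.cong)
  have "\<exists>!d. (\<forall>i. length e \<le> i \<longrightarrow> d i = 0) \<and> lincomb e d = b"
  proof (rule ex1I[of _ c'])
    show "(\<forall>i. length e \<le> i \<longrightarrow> c' i = 0) \<and> lincomb e c' = b" using c' by (simp add: c'_def)
  next
    fix d assume d: "(\<forall>i. length e \<le> i \<longrightarrow> d i = 0) \<and> lincomb e d = b"
    show "d = c'"
    proof
      fix i show "d i = c' i"
        using d c' lincomb_uniq[of d c' i] by (cases "i < length e") (auto simp: c'_def)
    qed
  qed
  thus ?thesis unfolding coord_def by (rule theI')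
qed

lemma coord_eq: "lincomb e c = b \<Longrightarrow> b \<in> B \<Longrightarrow> i < length e \<Longrightarrow> coord e b i = c i"
  using coord_spec[of b] lincomb_uniq[of "coord e b" c i] by simp

lemma coord_add: "x \<in> B \<Longrightarrow> y \<in> B \<Longrightarrow> i < length e \<Longrightarrow> coord e (x + y) i = coord e x i + coord e y i"
  by (rule coord_eq) (simp_all add: lincomb_add coord_spec Badd)

lemma coord_scale: "x \<in> B \<Longrightarrow> i < length e \<Longrightarrow> coord e (cscale a x) i = a * coord e x i"
  by (rule coord_eq) (simp_all add: lincomb_scale coord_spec Bscale)

lemma coord_zero: "i < length e \<Longrightarrow> coord e 0 i = 0"
  by (rule coord_eq) (simp_all add: lincomb_def B0)

lemma t_def': "t b = (\<Sum>i<length e. coord e (b ** E i) i) / of_nat (length e)"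
  by (simp add: can_trace_def)

lemma t_add: "x \<in> B \<Longrightarrow> y \<in> B \<Longrightarrow> t (x + y) = t x + t y"
  unfolding t_def' by (simp add: madd_mult coord_add Bmult EB sum.distrib add_divide_distrib)

lemma t_scale: "x \<in> B \<Longrightarrow> t (cscale a x) = a * t x"
  unfolding t_def' by (simp add: cscale_mult_left coord_scale Bmult EB sum_distrib_left)

lemma t_zero: "t 0 = 0"
  unfolding t_def' by (simp add: coord_zero)

lemma t_sum: "(\<And>s. s \<in> A \<Longrightarrow> f s \<in> B) \<Longrightarrow> t (\<Sum>s\<in>A. f s) = (\<Sum>s\<in>A. t (f s))"
proof (induct A rule: infinite_finite_induct)
  case (insert x F) thus ?case by (simp add: t_add Bsum)
qed (simp_all add: t_zero)

lemma t_sum_scale: "(\<And>s. s \<in> A \<Longrightarrow> f s \<in> B) \<Longrightarrow>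
  t (\<Sum>s\<in>A. cscale (c s) (f s)) = (\<Sum>s\<in>A. c s * t (f s))"
  by (subst t_sum) (auto intro!: sum.cong simp: Bscale t_scale)

lemma coord_t: assumes "b \<in> B" "i < length e" shows "coord e b i = t (S i ** b)"
proof -
  define c where "c = coord e b"
  have b: "b = (\<Sum>j<length e. cscale (c j) (E j))"
    using coord_spec[OF assms(1)] unfolding c_def lincomb_def by simp
  have "t (S i ** b) = t (\<Sum>j<length e. cscale (c j) (S i ** E j))"
    by (subst b) (simp add: sum_mult_right cscale_mult_right)
  also have "\<dots> = (\<Sum>j<length e. c j * t (S i ** E j))"
    using assms by (intro t_sum_scale) (simp add: Bmult SB EB)
  also have "\<dots> = (\<Sum>j<length e. if j = i then c j else 0)"
    using assms by (intro sum.cong) (auto simp: orth)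
  also have "\<dots> = c i" using assms by simp
  finally show ?thesis by (simp add: c_def)
qed

lemma expand: assumes "b \<in> B" shows "b = (\<Sum>i<length e. cscale (t (S i ** b)) (E i))"
proof -
  have "b = lincomb e (coord e b)" using coord_spec[OF assms] by simp
  also have "\<dots> = (\<Sum>i<length e. cscale (t (S i ** b)) (E i))"
    unfolding lincomb_def using assms by (intro sum.cong) (simp_all add: coord_t)
  finally show ?thesis .
qed

lemma tD: assumes "b \<in> B" shows "of_nat (length e) * t b = (\<Sum>i<length e. t (S i ** (b ** E i)))"
proof -
  have "of_nat (length e) * t b = (\<Sum>i<length e. coord e (b ** E i) i)"
    unfolding t_def' using npos by simp
  also have "\<dots> = (\<Sum>i<length e. t (S i ** (b ** E i)))"
    using assms by (intro sum.cong) (simp_all add: coord_t Bmult EB)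
  finally show ?thesis .
qed

lemma t_one: "t (mat 1) = 1"
proof -
  have "of_nat (length e) * t (mat 1) = (\<Sum>i<length e. t (S i ** E i))"
    using tD[OF B1] by simp
  also have "\<dots> = (\<Sum>i<length e. 1)" by (intro sum.cong) (simp_all add: orth)
  finally show ?thesis using npos by simp
qed

lemma RI: assumes "L \<in> B" "Y \<in> B" "R \<in> B"
  shows "(\<Sum>z<length e. t (S z ** Y) * t (L ** E z ** R)) = t (L ** Y ** R)"
proof -
  have "L ** Y ** R = L ** (\<Sum>z<length e. cscale (t (S z ** Y)) (E z)) ** R"
    using expand[OF assms(2)] by simp
  also have "\<dots> = (\<Sum>z<length e. cscale (t (S z ** Y)) (L ** E z ** R))"
    by (simp add: sum_mult_right sum_mult_left cscale_mult_right cscale_mult_left)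
  finally have eq: "L ** Y ** R = (\<Sum>z<length e. cscale (t (S z ** Y)) (L ** E z ** R))" .
  have "t (L ** Y ** R) = (\<Sum>z<length e. t (S z ** Y) * t (L ** E z ** R))"
    unfolding eq using assms by (intro t_sum_scale) (simp add: Bmult EB)
  thus ?thesis by simp
qed

lemma RI0: assumes "L \<in> B" "Y \<in> B"
  shows "(\<Sum>z<length e. t (S z ** Y) * t (L ** E z)) = t (L ** Y)"
  using RI[OF assms B1] by simp

lemma t_comm: assumes x: "x \<in> B" and y: "y \<in> B" shows "t (x ** y) = t (y ** x)"
proof -
  have A: "of_nat (length e) * t (x ** y) = (\<Sum>i<length e. \<Sum>j<length e. t (S j ** (y ** E i)) * t (S i ** x ** E j))"
    if x: "x \<in> B" and y: "y \<in> B" for x y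
  proof -
    have "of_nat (length e) * t (x ** y) = (\<Sum>i<length e. t (S i ** ((x ** y) ** E i)))"
      using tD[of "x ** y"] x y by (simp add: Bmult)
    also have "\<dots> = (\<Sum>i<length e. t ((S i ** x) ** (y ** E i)))"
      by (simp add: matrix_mul_assoc)
    also have "\<dots> = (\<Sum>i<length e. \<Sum>j<length e. t (S j ** (y ** E i)) * t (S i ** x ** E j))"
      using x y by (intro sum.cong refl RI0[symmetric]) (simp_all add: Bmult SB EB)
    finally show ?thesis .
  qed
  have "of_nat (length e) * t (x ** y) = of_nat (length e) * t (y ** x)"
    unfolding A[OF x y] A[OF y x]
    by (subst sum.swap) (simp add: mult.commute matrix_mul_assoc)
  thus ?thesis using npos by simp
qed

lemma t_herm: assumes x: "x \<in> B" and y: "y \<in> B" shows "t (cadj y ** x) = cnj (t (cadj x ** y))"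
proof -
  have A: "t (cadj y ** x) = (\<Sum>j<length e. cnj (t (S j ** y)) * t (S j ** x))"
    if x: "x \<in> B" and y: "y \<in> B" for x y
  proof -
    have "cadj y ** x = cadj (\<Sum>j<length e. cscale (t (S j ** y)) (E j)) ** x"
      using expand[OF y] by simp
    also have "\<dots> = (\<Sum>j<length e. cscale (cnj (t (S j ** y))) (S j ** x))"
      by (simp add: cadj_sum cadj_scale sum_mult_left cscale_mult_left)
    finally have eq: "cadj y ** x = (\<Sum>j<length e. cscale (cnj (t (S j ** y))) (S j ** x))" .
    show ?thesis unfolding eq using x by (intro t_sum_scale) (simp add: Bmult SB)
  qed
  show ?thesis unfolding A[OF x y] A[OF y x] by (simp add: mult.commute)
qed

lemma t_adj: assumes "x \<in> B" shows "t (cadj x) = cnj (t x)"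
  using t_herm[OF B1 assms] by simp

end


lemma words1_mem[simp]: "[a] \<in> words n (Suc 0) \<longleftrightarrow> a < n" by (simp add: words_def)
lemma words2_mem[simp]: "[a, b] \<in> words n 2 \<longleftrightarrow> a < n \<and> b < n" by (simp add: words_def)
lemma words2_mem'[simp]: "[a, b] \<in> words n (Suc (Suc 0)) \<longleftrightarrow> a < n \<and> b < n" by (simp add: words_def)
lemma words3_mem[simp]: "[a, b, c] \<in> words n 3 \<longleftrightarrow> a < n \<and> b < n \<and> c < n" by (simp add: words_def)

lemma words1E: "y \<in> words n (Suc 0) \<Longrightarrow> \<exists>a. y = [a] \<and> a < n"
  by (auto simp: words_def length_Suc_conv)
lemma words2E: "y \<in> words n 2 \<Longrightarrow> \<exists>a b. y = [a, b] \<and> a < n \<and> b < n"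
  by (auto simp: words_def length_Suc_conv numeral_2_eq_2)

lemma ifm: "(X::complex) * (if P then c else 0) = (if P then X * c else 0)" by simp

lemma sum_words1: "(\<Sum>w\<in>words n (Suc 0). F w) = (\<Sum>a<n. F [a])"
  by (simp add: sum_words_Suc)
lemma sum_words2: "(\<Sum>w\<in>words n 2. F w) = (\<Sum>a<n. \<Sum>b<n. F [a, b])"
  by (simp add: sum_words_Suc numeral_2_eq_2)
lemma sum_words2': "(\<Sum>w\<in>words n (Suc (Suc 0)). F w) = (\<Sum>a<n. \<Sum>b<n. F [a, b])"
  by (metis sum_words2 numeral_2_eq_2)
lemma sum_words3: "(\<Sum>w\<in>words n 3. F w) = (\<Sum>a<n. \<Sum>b<n. \<Sum>c<n. F [a, b, c])"
  by (simp add: sum_words_Suc numeral_3_eq_3)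

lemma sum_words3': "(\<Sum>w\<in>words n (Suc (Suc (Suc 0))). F w) = (\<Sum>a<n. \<Sum>b<n. \<Sum>c<n. F [a, b, c])"
  by (metis sum_words3 numeral_3_eq_3)
lemma words3_mem'[simp]: "[a, b, c] \<in> words n (Suc (Suc (Suc 0))) \<longleftrightarrow> a < n \<and> b < n \<and> c < n" by (simp add: words_def)
lemma words2E': "y \<in> words n (Suc (Suc 0)) \<Longrightarrow> \<exists>a b. y = [a, b] \<and> a < n \<and> b < n"
  by (auto simp: words_def length_Suc_conv)

lemma tri: assumes "p1 < (n::nat)" "q0 < n"
  shows "(\<Sum>a<n. \<Sum>b<n. \<Sum>c<n. (if c = p1 then X a b else 0) * (if a = q0 then Y b c else (0::complex)))
     = (\<Sum>b<n. X q0 b * Y b p1)"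
proof -
  have "(\<Sum>a<n. \<Sum>b<n. \<Sum>c<n. (if c = p1 then X a b else 0) * (if a = q0 then Y b c else (0::complex)))
      = (\<Sum>a<n. if a = q0 then (\<Sum>b<n. X a b * Y b p1) else 0)"
  proof (intro sum.cong refl)
    fix a assume a: "a \<in> {..<n}"
    show "(\<Sum>b<n. \<Sum>c<n. (if c = p1 then X a b else 0) * (if a = q0 then Y b c else (0::complex)))
      = (if a = q0 then (\<Sum>b<n. X a b * Y b p1) else 0)"
    proof (cases "a = q0")
      case True
      have "(\<Sum>b<n. \<Sum>c<n. (if c = p1 then X a b else 0) * (if a = q0 then Y b c else (0::complex)))
          = (\<Sum>b<n. \<Sum>c<n. if c = p1 then X a b * Y b c else 0)"
        using True by (intro sum.cong refl) simp
      also have "\<dots> = (\<Sum>b<n. X a b * Y b p1)" using assms by (simp add: sum.delta)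
      finally show ?thesis using True by simp
    qed simp
  qed
  also have "\<dots> = (\<Sum>b<n. X q0 b * Y b p1)" using assms by simp
  finally show ?thesis .
qed

context fb
begin

lemma eta_ty[simp]: "adom (aeta e) = 0" "acod (aeta e) = 1" "awf (length e) (aeta e)"
  by (simp_all add: aeta_def)
lemma mu_ty[simp]: "adom (amu e) = 2" "acod (amu e) = 1" "awf (length e) (amu e)"
  by (simp_all add: amu_def)

lemma ker_eta: "a < length e \<Longrightarrow> aker (aeta e) [a] [] = t (S a)"
  by (simp add: aeta_def)
lemma ker_mu: "a < length e \<Longrightarrow> b < length e \<Longrightarrow> c < length e \<Longrightarrow>
  aker (amu e) [a] [b, c] = t (S a ** E b ** E c)"
  by (simp add: amu_def matrix_mul_assoc)
lemma ker_id1: "a < length e \<Longrightarrow> b < length e \<Longrightarrow> aker (aid (length e) 1) [a] [b] = (if a = b then 1 else 0)"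
  by (simp add: aker_ops)

lemma R1: "acomp (length e) (astar (length e) (aeta e)) (aeta e) = aid (length e) 0"
proof (rule arrow_eqI[of "length e"])
  fix y x assume y: "y \<in> words (length e) (acod (acomp (length e) (astar (length e) (aeta e)) (aeta e)))"
    and x: "x \<in> words (length e) (adom (acomp (length e) (astar (length e) (aeta e)) (aeta e)))"
  have yx: "y = []" "x = []" using x y by auto
  have "aker (acomp (length e) (astar (length e) (aeta e)) (aeta e)) y x
     = (\<Sum>a<length e. cnj (t (S a)) * t (S a))"
    using yx by (simp add: aker_ops sum_words1 ker_eta)
  also have "\<dots> = (\<Sum>a<length e. t (S a ** mat 1) * t (mat 1 ** E a))"
    by (intro sum.cong refl) (simp add: t_adj[OF SB, symmetric])
  also have "\<dots> = 1" using RI0[OF B1 B1] t_one by simp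
  finally show "aker (acomp (length e) (astar (length e) (aeta e)) (aeta e)) y x = aker (aid (length e) 0) y x"
    using yx by (simp add: aker_ops)
qed simp_all


lemma tc: "X \<in> B \<Longrightarrow> Y \<in> B \<Longrightarrow> t (X ** Y) = t (Y ** X)" by (rule t_comm)

lemma R2: "acomp (length e) (amu e) (astar (length e) (amu e)) = ascale (length e) (of_nat (length e)) (aid (length e) 1)"
proof (rule arrow_eqI[of "length e"])
  fix y x assume y: "y \<in> words (length e) (acod (acomp (length e) (amu e) (astar (length e) (amu e))))"
    and x: "x \<in> words (length e) (adom (acomp (length e) (amu e) (astar (length e) (amu e))))"
  obtain p where p: "y = [p]" "p < length e" using y words1E by auto
  obtain q where q: "x = [q]" "q < length e" using x words1E by auto
  have "aker (acomp (length e) (amu e) (astar (length e) (amu e))) y x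
     = (\<Sum>a<length e. \<Sum>b<length e. t (S p ** E a ** E b) * cnj (t (S q ** E a ** E b)))"
    using p q by (simp add: aker_ops sum_words2 ker_mu)
  also have "\<dots> = (\<Sum>a<length e. \<Sum>b<length e. t (S b ** (S a ** E q)) * t ((S p ** E a) ** E b))"
  proof (intro sum.cong refl)
    fix a b assume a: "a \<in> {..<length e}" and b: "b \<in> {..<length e}"
    have "cnj (t (S q ** E a ** E b)) = t (cadj (S q ** E a ** E b))"
      using a b q by (simp add: t_adj Bmult SB EB)
    also have "\<dots> = t (S b ** (S a ** E q))" by (simp add: cadj_mult matrix_mul_assoc)
    finally show "t (S p ** E a ** E b) * cnj (t (S q ** E a ** E b)) = t (S b ** (S a ** E q)) * t ((S p ** E a) ** E b)"
      by simp
  qed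
  also have "\<dots> = (\<Sum>a<length e. t ((S p ** E a) ** (S a ** E q)))"
    using p q by (intro sum.cong refl RI0) (auto simp: Bmult SB EB)
  also have "\<dots> = (\<Sum>a<length e. t (S a ** ((E q ** S p) ** E a)))"
  proof (intro sum.cong refl)
    fix a assume a: "a \<in> {..<length e}"
    have "t ((S p ** E a) ** (S a ** E q)) = t ((S a ** E q) ** (S p ** E a))"
      using a p q by (intro tc) (auto simp: Bmult SB EB)
    thus "t ((S p ** E a) ** (S a ** E q)) = t (S a ** ((E q ** S p) ** E a))" by (simp add: matrix_mul_assoc)
  qed
  also have "\<dots> = of_nat (length e) * t (E q ** S p)"
    using tD[of "E q ** S p"] p q by (simp add: Bmult SB EB)
  also have "\<dots> = of_nat (length e) * t (S p ** E q)"
    using p q by (simp add: tc[of "E q"] Bmult SB EB)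
  also have "\<dots> = aker (ascale (length e) (of_nat (length e)) (aid (length e) 1)) y x"
    using p q by (simp add: aker_ops orth)
  finally show "aker (acomp (length e) (amu e) (astar (length e) (amu e))) y x = aker (ascale (length e) (of_nat (length e)) (aid (length e) 1)) y x" .
qed simp_all

lemma ker_etaid: "a < length e \<Longrightarrow> b < length e \<Longrightarrow> q < length e \<Longrightarrow>
  aker (atens (length e) (aeta e) (aid (length e) 1)) [a, b] [q] = (if b = q then t (S a) else 0)"
  by (simp add: aker_ops ker_eta)

lemma ker_etaid': "a < length e \<Longrightarrow> b < length e \<Longrightarrow> q < length e \<Longrightarrow>
  aker (atens (length e) (aeta e) (aid (length e) (Suc 0))) [a, b] [q] = (if b = q then t (S a) else 0)"
  using ker_etaid by simp

lemma ker_ideta: "a < length e \<Longrightarrow> b < length e \<Longrightarrow> q < length e \<Longrightarrow>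
  aker (atens (length e) (aid (length e) 1) (aeta e)) [a, b] [q] = (if a = q then t (S b) else 0)"
  by (simp add: aker_ops ker_eta)

lemma ker_ideta': "a < length e \<Longrightarrow> b < length e \<Longrightarrow> q < length e \<Longrightarrow>
  aker (atens (length e) (aid (length e) (Suc 0)) (aeta e)) [a, b] [q] = (if a = q then t (S b) else 0)"
  using ker_ideta by simp

lemma R3: "acomp (length e) (amu e) (atens (length e) (aeta e) (aid (length e) 1)) = aid (length e) 1"
proof (rule arrow_eqI[of "length e"])
  fix y x assume y: "y \<in> words (length e) (acod (acomp (length e) (amu e) (atens (length e) (aeta e) (aid (length e) 1))))"
    and x: "x \<in> words (length e) (adom (acomp (length e) (amu e) (atens (length e) (aeta e) (aid (length e) 1))))"
  obtain p where p: "y = [p]" "p < length e" using y words1E by auto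
  obtain q where q: "x = [q]" "q < length e" using x words1E by auto
  have "aker (acomp (length e) (amu e) (atens (length e) (aeta e) (aid (length e) 1))) y x
     = (\<Sum>a<length e. \<Sum>b<length e. aker (amu e) [p] [a, b] * aker (atens (length e) (aeta e) (aid (length e) 1)) [a, b] [q])"
    using p q by (simp add: aker_ops(1) sum_words2')
  also have "\<dots> = (\<Sum>a<length e. \<Sum>b<length e. t (S p ** E a ** E b) * (if b = q then t (S a) else 0))"
    using p q by (intro sum.cong refl) (simp add: ker_mu ker_etaid ker_etaid')
  also have "\<dots> = (\<Sum>a<length e. t (S p ** E a ** E q) * t (S a))"
    using q by (simp add: ifm)
  also have "\<dots> = t (S p ** mat 1 ** E q)"
    using RI[of "S p" "mat 1" "E q"] p q by (simp add: B1 SB EB mult.commute)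
  also have "\<dots> = aker (aid (length e) 1) y x"
    using p q by (simp add: aker_ops orth)
  finally show "aker (acomp (length e) (amu e) (atens (length e) (aeta e) (aid (length e) 1))) y x = aker (aid (length e) 1) y x" .
qed simp_all

lemma R4: "acomp (length e) (amu e) (atens (length e) (aid (length e) 1) (aeta e)) = aid (length e) 1"
proof (rule arrow_eqI[of "length e"])
  fix y x assume y: "y \<in> words (length e) (acod (acomp (length e) (amu e) (atens (length e) (aid (length e) 1) (aeta e))))"
    and x: "x \<in> words (length e) (adom (acomp (length e) (amu e) (atens (length e) (aid (length e) 1) (aeta e))))"
  obtain p where p: "y = [p]" "p < length e" using y words1E by auto
  obtain q where q: "x = [q]" "q < length e" using x words1E by auto
  have "aker (acomp (length e) (amu e) (atens (length e) (aid (length e) 1) (aeta e))) y x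
     = (\<Sum>a<length e. \<Sum>b<length e. aker (amu e) [p] [a, b] * aker (atens (length e) (aid (length e) 1) (aeta e)) [a, b] [q])"
    using p q by (simp add: aker_ops(1) sum_words2')
  also have "\<dots> = (\<Sum>a<length e. \<Sum>b<length e. if a = q then t (S p ** E a ** E b) * t (S b) else 0)"
    using p q by (intro sum.cong refl) (simp add: ker_mu ker_ideta ker_ideta')
  also have "\<dots> = (\<Sum>a<length e. if a = q then (\<Sum>b<length e. t (S p ** E a ** E b) * t (S b)) else 0)"
    by (intro sum.cong refl) simp
  also have "\<dots> = (\<Sum>b<length e. t (S p ** E q ** E b) * t (S b))"
    using q by simp
  also have "\<dots> = t ((S p ** E q) ** mat 1)"
    using RI0[of "S p ** E q" "mat 1"] p q by (simp add: B1 SB EB Bmult mult.commute)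
  also have "\<dots> = aker (aid (length e) 1) y x"
    using p q by (simp add: aker_ops orth)
  finally show "aker (acomp (length e) (amu e) (atens (length e) (aid (length e) 1) (aeta e))) y x = aker (aid (length e) 1) y x" .
qed simp_all

lemma ker_muid: "a < length e \<Longrightarrow> b < length e \<Longrightarrow> c < length e \<Longrightarrow> p0 < length e \<Longrightarrow> p1 < length e \<Longrightarrow>
  aker (atens (length e) (amu e) (aid (length e) 1)) [p0, p1] [a, b, c] = (if c = p1 then t (S p0 ** E a ** E b) else 0)"
  by (simp add: aker_ops ker_mu numeral_2_eq_2)

lemma ker_idmus: "a < length e \<Longrightarrow> b < length e \<Longrightarrow> c < length e \<Longrightarrow> q0 < length e \<Longrightarrow> q1 < length e \<Longrightarrow>
  aker (atens (length e) (aid (length e) 1) (astar (length e) (amu e))) [a, b, c] [q0, q1] = (if a = q0 then cnj (t (S q1 ** E b ** E c)) else 0)"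
  by (simp add: aker_ops ker_mu numeral_2_eq_2)

lemma R5: "acomp (length e) (atens (length e) (amu e) (aid (length e) 1)) (atens (length e) (aid (length e) 1) (astar (length e) (amu e)))
   = acomp (length e) (astar (length e) (amu e)) (amu e)"
proof (rule arrow_eqI[of "length e"])
  fix y x assume y: "y \<in> words (length e) (acod (acomp (length e) (atens (length e) (amu e) (aid (length e) 1)) (atens (length e) (aid (length e) 1) (astar (length e) (amu e)))))"
    and x: "x \<in> words (length e) (adom (acomp (length e) (atens (length e) (amu e) (aid (length e) 1)) (atens (length e) (aid (length e) 1) (astar (length e) (amu e)))))"
  have y': "y \<in> words (length e) (Suc (Suc 0))" using y by (simp add: numeral_2_eq_2)
  have x': "x \<in> words (length e) (Suc (Suc 0))" using x by (simp add: numeral_2_eq_2)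
  obtain p0 p1 where p: "y = [p0, p1]" "p0 < length e" "p1 < length e" using words2E'[OF y'] by blast
  obtain q0 q1 where q: "x = [q0, q1]" "q0 < length e" "q1 < length e" using words2E'[OF x'] by blast
  have "aker (acomp (length e) (atens (length e) (amu e) (aid (length e) 1)) (atens (length e) (aid (length e) 1) (astar (length e) (amu e)))) y x
     = (\<Sum>a<length e. \<Sum>b<length e. \<Sum>c<length e. aker (atens (length e) (amu e) (aid (length e) 1)) [p0, p1] [a, b, c]
          * aker (atens (length e) (aid (length e) 1) (astar (length e) (amu e))) [a, b, c] [q0, q1])"
    using p q by (simp add: aker_ops(1) sum_words3' numeral_2_eq_2)
  also have "\<dots> = (\<Sum>a<length e. \<Sum>b<length e. \<Sum>c<length e. (if c = p1 then t (S p0 ** E a ** E b) else 0)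
          * (if a = q0 then cnj (t (S q1 ** E b ** E c)) else 0))"
    using p q by (intro sum.cong refl) (simp only: ker_muid ker_idmus lessThan_iff)
  also have "\<dots> = (\<Sum>b<length e. t (S p0 ** E q0 ** E b) * cnj (t (S q1 ** E b ** E p1)))"
    using p q by (intro tri)
  also have "\<dots> = (\<Sum>b<length e. t (S b ** (E q1 ** S p1)) * t ((S p0 ** E q0) ** E b))"
  proof (intro sum.cong refl)
    fix b assume b: "b \<in> {..<length e}"
    have "cnj (t (S q1 ** E b ** E p1)) = t (cadj (S q1 ** E b ** E p1))"
      using b p q by (simp add: t_adj Bmult SB EB)
    also have "\<dots> = t (S p1 ** (S b ** E q1))" by (simp add: cadj_mult matrix_mul_assoc)
    also have "\<dots> = t ((S b ** E q1) ** S p1)" using b p q by (intro tc) (auto simp: Bmult SB EB)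
    finally show "t (S p0 ** E q0 ** E b) * cnj (t (S q1 ** E b ** E p1)) = t (S b ** (E q1 ** S p1)) * t ((S p0 ** E q0) ** E b)"
      by (simp add: matrix_mul_assoc mult.commute)
  qed
  also have "\<dots> = t ((S p0 ** E q0) ** (E q1 ** S p1))"
    using p q by (intro RI0) (auto simp: Bmult SB EB)
  also have "\<dots> = t (S p1 ** ((S p0 ** E q0) ** E q1))"
    using p q tc[of "S p0 ** E q0 ** E q1" "S p1"] by (simp add: Bmult SB EB matrix_mul_assoc)
  also have "\<dots> = t ((S p1 ** S p0) ** (E q0 ** E q1))" by (simp add: matrix_mul_assoc)
  also have "\<dots> = (\<Sum>c<length e. t (S c ** (E q0 ** E q1)) * t ((S p1 ** S p0) ** E c))"
    using p q by (intro RI0[symmetric]) (auto simp: Bmult SB EB)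
  also have "\<dots> = (\<Sum>c<length e. cnj (aker (amu e) [c] [p0, p1]) * aker (amu e) [c] [q0, q1])"
  proof (intro sum.cong refl)
    fix c assume c: "c \<in> {..<length e}"
    have "cnj (t (S c ** E p0 ** E p1)) = t (cadj (S c ** E p0 ** E p1))"
      using c p q by (simp add: t_adj Bmult SB EB)
    also have "\<dots> = t ((S p1 ** S p0) ** E c)" by (simp add: cadj_mult matrix_mul_assoc)
    finally show "t (S c ** (E q0 ** E q1)) * t ((S p1 ** S p0) ** E c) = cnj (aker (amu e) [c] [p0, p1]) * aker (amu e) [c] [q0, q1]"
      using c p q by (simp add: ker_mu matrix_mul_assoc mult.commute)
  qed
  also have "\<dots> = aker (acomp (length e) (astar (length e) (amu e)) (amu e)) y x"
    using p q by (simp add: aker_ops(1,3) sum_words1)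
  finally show "aker (acomp (length e) (atens (length e) (amu e) (aid (length e) 1)) (atens (length e) (aid (length e) 1) (astar (length e) (amu e)))) y x = aker (acomp (length e) (astar (length e) (amu e)) (amu e)) y x" .
qed simp_all

end

declare split_paired_All[simp del] split_paired_Ex[simp del]

definition elem :: "nat \<Rightarrow> nat \<Rightarrow> arrow \<Rightarrow> nat \<Rightarrow> arrow" where
  "elem n p g q = atens n (aid n p) (atens n g (aid n q))"

lemma elem_ty[simp]: "adom (elem n p g q) = p + adom g + q" "acod (elem n p g q) = p + acod g + q"
  "awf n (elem n p g q)"
  by (simp_all add: elem_def)

lemma elem_comp: "adom g = acod h \<Longrightarrow> acomp n (elem n p g q) (elem n p h q) = elem n p (acomp n g h) q"
  unfolding elem_def by (simp add: interchange acomp_id_left)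

lemma elem_star: "astar n (elem n p g q) = elem n p (astar n g) q"
  unfolding elem_def by (simp add: astar_tens astar_id)

lemma elem_id: "elem n p (aid n m) q = aid n (p + m + q)"
  unfolding elem_def by (simp add: aid_tens add.assoc)

lemma elem_scale: "elem n p (ascale n c g) q = ascale n c (elem n p g q)"
  unfolding elem_def by (simp add: atens_scale_left atens_scale_right)

lemma elem_shiftR: "elem n p (atens n g (aid n 1)) q = elem n p g (Suc q)"
  unfolding elem_def by (simp add: atens_assoc aid_tens)

lemma elem_shiftL: "elem n p (atens n (aid n 1) g) q = elem n (Suc p) g q"
proof -
  have "elem n p (atens n (aid n 1) g) q = atens n (aid n p) (atens n (aid n 1) (atens n g (aid n q)))"
    unfolding elem_def by (simp add: atens_assoc)
  also have "\<dots> = atens n (atens n (aid n p) (aid n 1)) (atens n g (aid n q))"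
    by (simp add: atens_assoc)
  also have "\<dots> = elem n (Suc p) g q" by (simp add: aid_tens elem_def)
  finally show ?thesis .
qed

lemma elem_split: "elem n (p + r) h q = atens n (aid n p) (elem n r h q)"
  unfolding elem_def by (simp add: aid_tens[symmetric] atens_assoc)

lemma elem_disj:
  assumes g: "awf n g" and h: "awf n h"
  shows "acomp n (astar n (elem n p g (M + acod h + q))) (elem n (p + acod g + M) h q)
       = acomp n (elem n (p + adom g + M) h q) (astar n (elem n p g (M + adom h + q)))"
proof -
  define H where "H = elem n M h q"
  have HL: "elem n (p + acod g + M) h q = atens n (aid n p) (atens n (aid n (acod g)) H)"
    unfolding H_def by (simp add: elem_split[symmetric] add.assoc)
  have HR: "elem n (p + adom g + M) h q = atens n (aid n p) (atens n (aid n (adom g)) H)"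
    unfolding H_def by (simp add: elem_split[symmetric] add.assoc)
  have cH: "acod H = M + acod h + q" "adom H = M + adom h + q" "awf n H" by (simp_all add: H_def)
  have "acomp n (astar n (elem n p g (M + acod h + q))) (elem n (p + acod g + M) h q)
      = acomp n (atens n (aid n p) (atens n (astar n g) (aid n (M + acod h + q)))) (atens n (aid n p) (atens n (aid n (acod g)) H))"
    by (simp only: HL) (simp add: elem_def astar_tens astar_id)
  also have "\<dots> = atens n (aid n p) (atens n (astar n g) H)"
    using g cH by (simp add: interchange acomp_id_left acomp_id_right)
  also have "\<dots> = acomp n (atens n (aid n p) (atens n (aid n (adom g)) H)) (atens n (aid n p) (atens n (astar n g) (aid n (M + adom h + q))))"
    using g cH by (simp add: interchange acomp_id_left acomp_id_right)
  also have "\<dots> = acomp n (elem n (p + adom g + M) h q) (astar n (elem n p g (M + adom h + q)))"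
    by (simp only: HR) (simp add: elem_def astar_tens astar_id)
  finally show ?thesis .
qed

context fb
begin

abbreviation "nn \<equiv> length e"
abbreviation "ETA \<equiv> aeta e"
abbreviation "MU \<equiv> amu e"
abbreviation "MUS \<equiv> astar (length e) (amu e)"

definition Elem :: "arrow set" where
  "Elem = {elem nn p g q | p g q. g = ETA \<or> g = MUS}"

inductive EW :: "nat \<Rightarrow> arrow \<Rightarrow> bool" where
  EW_id: "EW i (aid nn m)"
| EW_step: "EW i w \<Longrightarrow> Q \<in> Elem \<Longrightarrow> adom Q = acod w \<Longrightarrow> EW (Suc i) (acomp nn Q w)"

definition AB :: "nat \<Rightarrow> nat \<Rightarrow> arrow set" where
  "AB i j = {acomp nn x (astar nn y) | x y. EW i x \<and> EW j y \<and> adom x = adom y}"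

lemma Elem_awf: "Q \<in> Elem \<Longrightarrow> awf nn Q" by (auto simp: Elem_def)

lemma EW_awf: "EW i w \<Longrightarrow> awf nn w" by (induct rule: EW.induct) auto

lemma EW_mono: "EW i w \<Longrightarrow> i \<le> j \<Longrightarrow> EW j w"
proof (induct arbitrary: j rule: EW.induct)
  case (EW_id i m) show ?case by (rule EW.EW_id)
next
  case (EW_step i w Q)
  then obtain j' where "j = Suc j'" "i \<le> j'" by (cases j) auto
  thus ?case using EW_step by (auto intro: EW.EW_step)
qed

lemma EW_comp0: "EW i x \<Longrightarrow> \<forall>y. EW j y \<longrightarrow> adom x = acod y \<longrightarrow> EW (i + j) (acomp nn x y)"
proof (induct rule: EW.induct)
  case (EW_id i m)
  show ?case
  proof (intro allI impI)
    fix y assume "EW j y" "adom (aid nn m) = acod y"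
    thus "EW (i + j) (acomp nn (aid nn m) y)" using EW_awf[of j y] by (auto simp: acomp_id_left intro: EW_mono)
  qed
next
  case (EW_step i w Q)
  show ?case
  proof (intro allI impI)
    fix y assume y: "EW j y" "adom (acomp nn Q w) = acod y"
    have "acomp nn (acomp nn Q w) y = acomp nn Q (acomp nn w y)"
      using EW_step y by (simp add: acomp_assoc)
    moreover have "EW (i + j) (acomp nn w y)" using EW_step(2) y by simp
    ultimately show "EW (Suc i + j) (acomp nn (acomp nn Q w) y)" using EW_step by (auto intro: EW.EW_step)
  qed
qed

lemma EW_comp: "EW i x \<Longrightarrow> EW j y \<Longrightarrow> adom x = acod y \<Longrightarrow> EW (i + j) (acomp nn x y)"
  using EW_comp0 by blast

lemma Elem_EW1: "Q \<in> Elem \<Longrightarrow> EW 1 Q"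
proof -
  assume Q: "Q \<in> Elem"
  have "EW (Suc 0) (acomp nn Q (aid nn (adom Q)))" by (rule EW.EW_step[OF EW.EW_id Q]) simp
  thus ?thesis using Elem_awf[OF Q] by (simp add: acomp_id_right)
qed

lemma AB_mem: "EW i x \<Longrightarrow> EW j y \<Longrightarrow> adom x = adom y \<Longrightarrow> k = acod y \<Longrightarrow> l = acod x \<Longrightarrow>
   acomp nn x (astar nn y) \<in> lspan nn (AB i j) k l"
  by (rule lspan.base) (auto simp: AB_def)

lemma AB_id: "aid nn m \<in> lspan nn (AB i j) m m"
proof -
  have "acomp nn (aid nn m) (astar nn (aid nn m)) \<in> lspan nn (AB i j) m m"
    by (rule AB_mem) (auto intro: EW.EW_id)
  thus ?thesis by (simp add: astar_id acomp_id_left)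
qed

lemma elem_in: "elem nn p ETA q \<in> Elem" "elem nn p MUS q \<in> Elem" by (auto simp: Elem_def)

end

context fb
begin

lemma MUS_ty[simp]: "adom MUS = 1" "acod MUS = 2" "awf nn MUS" by simp_all

lemma ov_ee: "acomp nn (astar nn (elem nn p ETA q)) (elem nn p ETA q) = aid nn (p + q)"
  by (simp add: elem_star elem_comp R1 elem_id)

lemma ov_em: "acomp nn (astar nn (elem nn p ETA (Suc q))) (elem nn p MUS q) = aid nn (p + 1 + q)"
proof -
  have "acomp nn (astar nn (elem nn p ETA (Suc q))) (elem nn p MUS q)
      = elem nn p (acomp nn (astar nn (atens nn ETA (aid nn 1))) MUS) q"
    by (simp add: elem_shiftR[symmetric] elem_star elem_comp)
  also have "acomp nn (astar nn (atens nn ETA (aid nn 1))) MUS = astar nn (acomp nn MU (atens nn ETA (aid nn 1)))"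
    by (simp add: astar_comp)
  also have "\<dots> = aid nn 1" by (simp add: R3[simplified] astar_id)
  finally show ?thesis by (simp add: elem_id)
qed

lemma ov_me0: "acomp nn (astar nn (elem nn p MUS q)) (elem nn p ETA (Suc q)) = aid nn (p + 1 + q)"
proof -
  have "acomp nn (astar nn (elem nn p MUS q)) (elem nn p ETA (Suc q))
      = elem nn p (acomp nn (astar nn MUS) (atens nn ETA (aid nn 1))) q"
    by (simp add: elem_shiftR[symmetric] elem_star elem_comp)
  also have "acomp nn (astar nn MUS) (atens nn ETA (aid nn 1)) = aid nn 1"
    by (simp add: astar_astar R3[simplified])
  finally show ?thesis by (simp add: elem_id)
qed

lemma ov_me1: "acomp nn (astar nn (elem nn p MUS q)) (elem nn (Suc p) ETA q) = aid nn (p + 1 + q)"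
proof -
  have "acomp nn (astar nn (elem nn p MUS q)) (elem nn (Suc p) ETA q)
      = elem nn p (acomp nn (astar nn MUS) (atens nn (aid nn 1) ETA)) q"
    by (simp add: elem_shiftL[symmetric] elem_star elem_comp)
  also have "acomp nn (astar nn MUS) (atens nn (aid nn 1) ETA) = aid nn 1"
    by (simp add: astar_astar R4[simplified])
  finally show ?thesis by (simp add: elem_id)
qed

lemma ov_mm0: "acomp nn (astar nn (elem nn p MUS q)) (elem nn p MUS q) = ascale nn (of_nat nn) (aid nn (p + 1 + q))"
proof -
  have "acomp nn (astar nn (elem nn p MUS q)) (elem nn p MUS q) = elem nn p (acomp nn MU MUS) q"
    by (simp add: elem_star elem_comp astar_astar)
  thus ?thesis by (simp add: R2 elem_scale elem_id)
qed

lemma ov_mm1: "acomp nn (astar nn (elem nn p MUS (Suc q))) (elem nn (Suc p) MUS q)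
   = acomp nn (elem nn p MUS q) (astar nn (elem nn p MUS q))"
proof -
  have "acomp nn (astar nn (elem nn p MUS (Suc q))) (elem nn (Suc p) MUS q)
      = elem nn p (acomp nn (astar nn (atens nn MUS (aid nn 1))) (atens nn (aid nn 1) MUS)) q"
    by (simp add: elem_shiftR[symmetric] elem_shiftL[symmetric] elem_star elem_comp)
  also have "acomp nn (astar nn (atens nn MUS (aid nn 1))) (atens nn (aid nn 1) MUS)
      = acomp nn (atens nn MU (aid nn 1)) (atens nn (aid nn 1) MUS)"
    by (simp add: astar_tens astar_astar astar_id)
  also have "\<dots> = acomp nn MUS MU" by (rule R5)
  also have "elem nn p (acomp nn MUS MU) q = acomp nn (elem nn p MUS q) (elem nn p MU q)"
    by (simp add: elem_comp)
  also have "\<dots> = acomp nn (elem nn p MUS q) (astar nn (elem nn p MUS q))"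
    by (simp add: elem_star astar_astar)
  finally show ?thesis .
qed

lemma lspan_idx: "f \<in> lspan n A k l \<Longrightarrow> k = k' \<Longrightarrow> l = l' \<Longrightarrow> f \<in> lspan n A k' l'" by simp

lemma gen_cases: "g = ETA \<or> g = MUS \<Longrightarrow> awf nn g" by auto

lemma LL_half:
  assumes g: "g = ETA \<or> g = MUS" and h: "h = ETA \<or> h = MUS"
    and eq: "p + acod g + q = p' + acod h + q'" and le: "p \<le> p'"
  shows "acomp nn (astar nn (elem nn p g q)) (elem nn p' h q') \<in> lspan nn (AB 1 1) (p' + adom h + q') (p + adom g + q)"
proof (cases "p + acod g \<le> p'")
  case True
  define M where "M = p' - p - acod g"
  have p': "p' = p + acod g + M" using True by (simp add: M_def)
  have q: "q = M + acod h + q'" using eq p' by simp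
  have "acomp nn (astar nn (elem nn p g q)) (elem nn p' h q')
      = acomp nn (elem nn (p + adom g + M) h q') (astar nn (elem nn p g (M + adom h + q')))"
    unfolding p' q by (rule elem_disj[OF gen_cases[OF g] gen_cases[OF h]])
  also have "\<dots> \<in> lspan nn (AB 1 1) (p' + adom h + q') (p + adom g + q)"
    by (rule AB_mem) (use g h p' q in \<open>auto intro!: Elem_EW1[simplified] simp: elem_in\<close>)
  finally show ?thesis .
next
  case False
  show ?thesis
  proof (cases "g = ETA")
    case gE: True
    hence pp: "p' = p" using False le by simp
    show ?thesis
    proof (cases "h = ETA")
      case True
      hence "q' = q" using eq pp gE by simp
      thus ?thesis using gE True pp ov_ee[of p q] AB_id[of "p + q" 1 1] by simp
    next
      case False
      hence hM: "h = MUS" using h by simp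
      hence qq: "q = Suc q'" using eq pp gE by simp
      thus ?thesis using gE hM pp ov_em[of p q'] AB_id[of "p + 1 + q'" 1 1] by simp
    qed
  next
    case False
    hence gM: "g = MUS" using g by simp
    hence pp: "p' = p \<or> p' = Suc p" using le \<open>\<not> p + acod g \<le> p'\<close> by auto
    show ?thesis
    proof (cases "h = ETA")
      case hE: True
      show ?thesis
      proof (cases "p' = p")
        case True
        hence "q' = Suc q" using eq gM hE by simp
        thus ?thesis using gM hE True ov_me0[of p q] AB_id[of "p + 1 + q" 1 1] by simp
      next
        case False
        hence p1: "p' = Suc p" using pp by simp
        hence "q' = q" using eq gM hE by simp
        thus ?thesis using gM hE p1 ov_me1[of p q] AB_id[of "p + 1 + q" 1 1] by simp
      qed
    next
      case False
      hence hM: "h = MUS" using h by simp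
      show ?thesis
      proof (cases "p' = p")
        case True
        hence "q' = q" using eq gM hM by simp
        thus ?thesis using gM hM True ov_mm0[of p q] lspan.scale[OF AB_id[of "p + 1 + q" 1 1]] by simp
      next
        case False
        hence p1: "p' = Suc p" using pp by simp
        hence qq: "q = Suc q'" using eq gM hM by simp
        have "acomp nn (elem nn p MUS q') (astar nn (elem nn p MUS q')) \<in> lspan nn (AB 1 1) (p + 2 + q') (p + 2 + q')"
          by (rule AB_mem) (auto intro!: Elem_EW1[simplified] simp: elem_in)
        thus ?thesis using gM hM p1 qq ov_mm1[of p q'] by simp
      qed
    qed
  qed
qed

lemma AB_star: "z \<in> AB i j \<Longrightarrow> astar nn z \<in> AB j i"
proof -
  assume "z \<in> AB i j"
  then obtain x y where z: "z = acomp nn x (astar nn y)" "EW i x" "EW j y" "adom x = adom y"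
    unfolding AB_def by blast
  have "astar nn z = acomp nn y (astar nn x)"
    using z EW_awf[OF z(3)] by (simp add: astar_comp astar_astar)
  hence "\<exists>x' y'. astar nn z = acomp nn x' (astar nn y') \<and> EW j x' \<and> EW i y' \<and> adom x' = adom y'"
    using z by (intro exI[of _ y] exI[of _ x]) auto
  thus ?thesis unfolding AB_def by simp
qed

lemma LL:
  assumes Q1: "Q1 \<in> Elem" and Q2: "Q2 \<in> Elem" and c: "acod Q1 = acod Q2"
  shows "acomp nn (astar nn Q1) Q2 \<in> lspan nn (AB 1 1) (adom Q2) (adom Q1)"
proof -
  obtain p g q where 1: "Q1 = elem nn p g q" "g = ETA \<or> g = MUS" using Q1 unfolding Elem_def by blast
  obtain p' h q' where 2: "Q2 = elem nn p' h q'" "h = ETA \<or> h = MUS" using Q2 unfolding Elem_def by blast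
  show ?thesis
  proof (cases "p \<le> p'")
    case True thus ?thesis using LL_half[OF 1(2) 2(2), of p q p' q'] c 1 2 by simp
  next
    case False
    hence "acomp nn (astar nn Q2) Q1 \<in> lspan nn (AB 1 1) (adom Q1) (adom Q2)"
      using LL_half[OF 2(2) 1(2), of p' q' p q] c 1 2 by simp
    hence "astar nn (acomp nn (astar nn Q2) Q1) \<in> lspan nn (astar nn ` AB 1 1) (adom Q2) (adom Q1)"
      by (rule lspan_star)
    moreover have "astar nn (acomp nn (astar nn Q2) Q1) = acomp nn (astar nn Q1) Q2"
      using c Elem_awf[OF Q2] by (simp add: astar_comp astar_astar)
    ultimately have "acomp nn (astar nn Q1) Q2 \<in> lspan nn (astar nn ` AB 1 1) (adom Q2) (adom Q1)" by simp
    thus ?thesis by (rule lspan_sub) (auto intro!: lspan.base AB_star)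
  qed
qed

lemma KL: "EW a u \<Longrightarrow> EW j v \<Longrightarrow> acod u = acod v \<Longrightarrow>
   acomp nn (astar nn u) v \<in> lspan nn (AB j a) (adom v) (adom u)"
proof (induction "a + j" arbitrary: a j u v rule: less_induct)
  case less
  note IH = less.hyps
  from less.prems(1) show ?case
  proof cases
    case (EW_id m)
    have "acomp nn (astar nn u) v = v" using EW_id less.prems EW_awf[OF less.prems(2)]
      by (simp add: astar_id acomp_id_left)
    also have "v = acomp nn v (astar nn (aid nn (adom v)))"
      using EW_awf[OF less.prems(2)] by (simp add: astar_id acomp_id_right)
    also have "\<dots> \<in> lspan nn (AB j a) (adom v) (adom u)"
      by (rule AB_mem) (use less.prems EW_id in \<open>auto intro: EW.EW_id\<close>)
    finally show ?thesis .
  next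
    case (EW_step a' u' Q)
    note u = this
    from less.prems(2) show ?thesis
    proof cases
      case (EW_id m)
      have "acomp nn (astar nn u) v = astar nn u"
        using EW_id less.prems EW_awf[OF less.prems(1)] by (simp add: acomp_id_right)
      also have "\<dots> = acomp nn (aid nn (adom u)) (astar nn u)"
        using EW_awf[OF less.prems(1)] by (simp add: acomp_id_left)
      also have "\<dots> \<in> lspan nn (AB j a) (adom v) (adom u)"
        by (rule AB_mem) (use less.prems EW_id in \<open>auto intro: EW.EW_id\<close>)
      finally show ?thesis .
    next
      case (EW_step j' v' R)
      note v = this
      have cQR: "acod Q = acod R" using less.prems(3) u v by simp
      have Z: "acomp nn (astar nn Q) R \<in> lspan nn (AB 1 1) (adom R) (adom Q)"
        by (rule LL[OF u(4) v(4) cQR])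
      have eq: "acomp nn (astar nn u) v = acomp nn (acomp nn (astar nn u') (acomp nn (astar nn Q) R)) v'"
      proof -
        have "acomp nn (astar nn u) v = acomp nn (acomp nn (astar nn u') (astar nn Q)) (acomp nn R v')"
          using u v by (simp add: astar_comp)
        also have "\<dots> = acomp nn (acomp nn (acomp nn (astar nn u') (astar nn Q)) R) v'"
          using v by (simp add: acomp_assoc)
        also have "\<dots> = acomp nn (acomp nn (astar nn u') (acomp nn (astar nn Q) R)) v'"
          using cQR by (simp add: acomp_assoc)
        finally show ?thesis .
      qed
      have main: "acomp nn (acomp nn (astar nn u') (acomp nn (astar nn Q) R)) v'
          \<in> lspan nn (AB j a) (adom v') (acod (astar nn u'))"
      proof (rule lspan_comp[OF Z])
        show "adom (astar nn u') = adom Q" using u by simp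
        show "acod v' = adom R" using v by simp
      next
        fix z assume z: "z \<in> AB 1 1" "adom z = adom R" "acod z = adom Q" "awf nn z"
        then obtain x y where xy: "z = acomp nn x (astar nn y)" "EW 1 x" "EW 1 y" "adom x = adom y"
          unfolding AB_def by blast
        have ty: "acod y = adom R" "acod x = adom Q" using z xy by auto
        have e1: "acomp nn (acomp nn (astar nn u') z) v' = acomp nn (acomp nn (astar nn u') x) (acomp nn (astar nn y) v')"
          using xy ty v by (simp add: acomp_assoc)
        have W1: "acomp nn (astar nn u') x \<in> lspan nn (AB 1 a') (adom x) (adom u')"
          by (rule IH) (use u v ty xy in auto)
        have "acomp nn (acomp nn (astar nn u') x) (acomp nn (astar nn y) v') \<in> lspan nn (AB j a) (adom (acomp nn (astar nn y) v')) (adom u')"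
        proof (rule lspan_right[OF W1])
          show "acod (acomp nn (astar nn y) v') = adom x" using xy by simp
        next
          fix w assume w: "w \<in> AB 1 a'" "adom w = adom x" "acod w = adom u'" "awf nn w"
          then obtain r s where rs: "w = acomp nn r (astar nn s)" "EW 1 r" "EW a' s" "adom r = adom s"
            unfolding AB_def by blast
          have ty2: "acod s = adom x" "acod r = adom u'" using w rs by auto
          have e2: "acomp nn w (acomp nn (astar nn y) v') = acomp nn r (acomp nn (astar nn (acomp nn y s)) v')"
            using rs ty2 xy ty v by (simp add: acomp_assoc astar_comp)
          have ys: "EW a (acomp nn y s)" using EW_comp[OF xy(3) rs(3)] ty2 xy u by simp
          have W2': "acomp nn (astar nn (acomp nn y s)) v' \<in> lspan nn (AB j' a) (adom v') (adom (acomp nn y s))"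
            by (rule IH) (use u v ty xy ys in auto)
          hence W2: "acomp nn (astar nn (acomp nn y s)) v' \<in> lspan nn (AB j' a) (adom v') (adom s)" by simp
          have "acomp nn r (acomp nn (astar nn (acomp nn y s)) v') \<in> lspan nn (AB j a) (adom v') (acod r)"
          proof (rule lspan_left[OF W2])
            show "adom r = adom s" by (rule rs(4))
          next
            fix g0 assume g0: "g0 \<in> AB j' a" "adom g0 = adom v'" "acod g0 = adom s" "awf nn g0"
            then obtain x2 y2 where xy2: "g0 = acomp nn x2 (astar nn y2)" "EW j' x2" "EW a y2" "adom x2 = adom y2"
              unfolding AB_def by blast
            have ty3: "acod y2 = adom v'" "acod x2 = adom s" using g0 xy2 by auto
            have e3: "acomp nn r g0 = acomp nn (acomp nn r x2) (astar nn y2)"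
              using xy2 by (simp add: acomp_assoc)
            have rx: "EW j (acomp nn r x2)" using EW_comp[OF rs(2) xy2(2)] ty3 rs v by simp
            show "acomp nn r g0 \<in> lspan nn (AB j a) (adom v') (acod r)"
              unfolding e3 by (rule AB_mem[OF rx xy2(3)]) (use xy2 ty3 in auto)
          qed
          thus "acomp nn w (acomp nn (astar nn y) v') \<in> lspan nn (AB j a) (adom (acomp nn (astar nn y) v')) (adom u')"
            unfolding e2 using ty2 by simp
        qed
        thus "acomp nn (acomp nn (astar nn u') z) v' \<in> lspan nn (AB j a) (adom v') (acod (astar nn u'))"
          unfolding e1 by simp
      qed
      show ?thesis unfolding eq using main u v by simp
    qed
  qed
qed

end

lemma elem_tensR: "atens n (elem n p g q0) (aid n q) = elem n p g (q0 + q)"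
  unfolding elem_def by (simp add: atens_assoc aid_tens)

lemma elem_tensL: "atens n (aid n p) (elem n p0 g q) = elem n (p + p0) g q"
  by (simp add: elem_split)

context fb
begin

lemma aid_CBplus: "aid nn m \<in> CBplus e"
proof (induct m)
  case 0 show ?case by (rule CBplus.id0)
next
  case (Suc m)
  have "atens nn (aid nn 1) (aid nn m) \<in> CBplus e" by (rule CBplus.tens[OF CBplus.id1 Suc])
  thus ?case by (simp add: aid_tens)
qed

lemma Elem_CBplus: "Q \<in> Elem \<Longrightarrow> Q \<in> CBplus e"
  unfolding Elem_def elem_def
  by (auto intro!: CBplus.tens aid_CBplus CBplus.eta CBplus.mu_star)

lemma EW_CBplus: "EW i w \<Longrightarrow> w \<in> CBplus e"
  by (induct rule: EW.induct) (auto intro: aid_CBplus CBplus.comp Elem_CBplus)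

lemma Elem_I: "g = ETA \<or> g = MUS \<Longrightarrow> elem nn p g q \<in> Elem" unfolding Elem_def by blast

lemma Elem_tensR: "Q \<in> Elem \<Longrightarrow> atens nn Q (aid nn q) \<in> Elem"
proof -
  assume "Q \<in> Elem"
  then obtain p g q0 where "Q = elem nn p g q0" "g = ETA \<or> g = MUS" unfolding Elem_def by blast
  thus ?thesis by (simp add: elem_tensR Elem_I)
qed

lemma Elem_tensL: "Q \<in> Elem \<Longrightarrow> atens nn (aid nn p) Q \<in> Elem"
proof -
  assume "Q \<in> Elem"
  then obtain p0 g q where "Q = elem nn p0 g q" "g = ETA \<or> g = MUS" unfolding Elem_def by blast
  thus ?thesis by (simp add: elem_tensL Elem_I)
qed

lemma EW_tensR: "EW i x \<Longrightarrow> EW i (atens nn x (aid nn q))"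
proof (induct rule: EW.induct)
  case (EW_id i m) thus ?case by (simp add: aid_tens EW.EW_id)
next
  case (EW_step i w Q)
  have "atens nn (acomp nn Q w) (aid nn q) = acomp nn (atens nn Q (aid nn q)) (atens nn w (aid nn q))"
    using EW_step by (simp add: interchange acomp_id_left)
  thus ?case using EW_step by (auto intro!: EW.EW_step Elem_tensR)
qed

lemma EW_tensL: "EW i x \<Longrightarrow> EW i (atens nn (aid nn p) x)"
proof (induct rule: EW.induct)
  case (EW_id i m) thus ?case by (simp add: aid_tens EW.EW_id)
next
  case (EW_step i w Q)
  have "atens nn (aid nn p) (acomp nn Q w) = acomp nn (atens nn (aid nn p) Q) (atens nn (aid nn p) w)"
    using EW_step by (simp add: interchange acomp_id_left)
  thus ?case using EW_step by (auto intro!: EW.EW_step Elem_tensL)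
qed

lemma EW_tens: "EW i x \<Longrightarrow> EW j y \<Longrightarrow> EW (i + j) (atens nn x y)"
proof -
  assume x: "EW i x" and y: "EW j y"
  have "atens nn x y = acomp nn (atens nn x (aid nn (acod y))) (atens nn (aid nn (adom x)) y)"
    using EW_awf[OF x] EW_awf[OF y] by (simp add: interchange acomp_id_left acomp_id_right)
  also have "EW (i + j) \<dots>" by (rule EW_comp[OF EW_tensR[OF x] EW_tensL[OF y]]) simp
  finally show ?thesis .
qed

definition EWall :: "arrow set" where "EWall = {w. \<exists>i. EW i w}"

lemma EWall_base: "EW i w \<Longrightarrow> k = adom w \<Longrightarrow> l = acod w \<Longrightarrow> w \<in> lspan nn EWall k l"
  by (rule lspan.base) (auto simp: EWall_def EW_awf)

lemma gen_EW: "g = ETA \<or> g = MUS \<Longrightarrow> EW 1 g"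
proof -
  assume g: "g = ETA \<or> g = MUS"
  have "elem nn 0 g 0 \<in> Elem" using g unfolding Elem_def by blast
  moreover have "elem nn 0 g 0 = g" using g unfolding elem_def by (auto simp: atens_id0_left atens_id0_right)
  ultimately show ?thesis using Elem_EW1 by metis
qed

lemma step1: "f \<in> CBplus e \<Longrightarrow> f \<in> lspan nn EWall (adom f) (acod f)"
proof (induct rule: CBplus.induct)
  case eta thus ?case using gen_EW[of ETA] by (auto intro: EWall_base)
next
  case mu_star thus ?case using gen_EW[of MUS] by (auto intro: EWall_base)
next
  case id0 thus ?case by (auto intro: EWall_base EW.EW_id)
next
  case id1 thus ?case by (auto intro: EWall_base EW.EW_id)
next
  case (comp f g)
  have "acomp nn g f \<in> lspan nn EWall (adom f) (acod g)"
  proof (rule lspan_right[OF comp(4)])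
    show "acod f = adom g" using comp by simp
  next
    fix w assume w: "w \<in> EWall" "adom w = adom g" "acod w = acod g" "awf nn w"
    show "acomp nn w f \<in> lspan nn EWall (adom f) (acod g)"
      using lspan_left[OF comp(2), of w EWall] w comp(5)
    proof -
      have "acomp nn w f \<in> lspan nn EWall (adom f) (acod w)"
      proof (rule lspan_left[OF comp(2)])
        show "adom w = acod f" using w comp by simp
      next
        fix w' assume w': "w' \<in> EWall" "adom w' = adom f" "acod w' = acod f" "awf nn w'"
        obtain i where i: "EW i w" using w unfolding EWall_def by blast
        obtain i' where i': "EW i' w'" using w' unfolding EWall_def by blast
        show "acomp nn w w' \<in> lspan nn EWall (adom f) (acod w)"
          by (rule EWall_base[OF EW_comp[OF i i']]) (use w w' comp in auto)
      qed
      thus ?thesis using w by simp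
    qed
  qed
  thus ?case by simp
next
  case (tens f g)
  have "atens nn f g \<in> lspan nn EWall (adom f + adom g) (acod f + acod g)"
  proof (rule lspan_tens_left[OF tens(2)])
    fix w assume w: "w \<in> EWall" "adom w = adom f" "acod w = acod f" "awf nn w"
    obtain i where i: "EW i w" using w unfolding EWall_def by blast
    have "atens nn w g \<in> lspan nn EWall (adom w + adom g) (acod w + acod g)"
    proof (rule lspan_tens_right[OF tens(4)])
      fix w' assume w': "w' \<in> EWall" "adom w' = adom g" "acod w' = acod g" "awf nn w'"
      obtain i' where i': "EW i' w'" using w' unfolding EWall_def by blast
      show "atens nn w w' \<in> lspan nn EWall (adom w + adom g) (acod w + acod g)"
        by (rule EWall_base[OF EW_tens[OF i i']]) (use w' in auto)
    qed
    thus "atens nn w g \<in> lspan nn EWall (adom f + adom g) (acod f + acod g)" using w by simp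
  qed
  thus ?case by simp
next
  case (zero k l) thus ?case by (simp add: lspan.zero)
next
  case (add f g) thus ?case by (simp add: lspan.add)
next
  case (scale f c) thus ?case by (simp add: lspan.scale)
qed

definition ABall :: "arrow set" where
  "ABall = {acomp nn x (astar nn y) | x y. x \<in> EWall \<and> y \<in> EWall \<and> adom x = adom y}"

lemma AB_ABall: assumes f: "f \<in> lspan nn (AB i j) k l" shows "f \<in> lspan nn ABall k l"
proof (rule lspan_sub[OF f])
  fix a assume a: "a \<in> AB i j" "adom a = k" "acod a = l" "awf nn a"
  then obtain x y where "a = acomp nn x (astar nn y)" "EW i x" "EW j y" "adom x = adom y"
    unfolding AB_def by blast
  hence "a \<in> ABall" unfolding ABall_def EWall_def by blast
  thus "a \<in> lspan nn ABall k l" using a by (intro lspan.base) auto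
qed

lemma step3: assumes b: "b \<in> CBplus e" and c: "c \<in> CBplus e" and bc: "acod b = acod c"
  shows "acomp nn (astar nn b) c \<in> lspan nn ABall (adom c) (adom b)"
proof -
  have sb: "astar nn b \<in> lspan nn (astar nn ` EWall) (acod b) (adom b)"
    by (rule lspan_star[OF step1[OF b]])
  have "acomp nn (astar nn b) c \<in> lspan nn ABall (adom c) (adom b)"
  proof (rule lspan_right[OF sb])
    show "acod c = acod b" using bc by simp
  next
    fix a assume a: "a \<in> astar nn ` EWall" "adom a = acod b" "acod a = adom b" "awf nn a"
    then obtain w i where w: "a = astar nn w" "EW i w" unfolding EWall_def by blast
    have "acomp nn (astar nn w) c \<in> lspan nn ABall (adom c) (acod (astar nn w))"
    proof (rule lspan_left[OF step1[OF c]])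
      show "adom (astar nn w) = acod c" using a w bc by simp
    next
      fix w' assume w': "w' \<in> EWall" "adom w' = adom c" "acod w' = acod c" "awf nn w'"
      then obtain i' where i': "EW i' w'" unfolding EWall_def by blast
      have "acomp nn (astar nn w) w' \<in> lspan nn (AB i' i) (adom w') (adom w)"
        by (rule KL[OF w(2) i']) (use a w w' bc in simp)
      thus "acomp nn (astar nn w) w' \<in> lspan nn ABall (adom c) (acod (astar nn w))"
        using w' by (simp add: AB_ABall)
    qed
    thus "acomp nn a c \<in> lspan nn ABall (adom c) (adom b)" using a w by simp
  qed
  thus ?thesis .
qed

definition ABP :: "arrow set" where
  "ABP = {acomp nn a (astar nn b) | a b. a \<in> CBplus e \<and> b \<in> CBplus e \<and> adom a = adom b}"

lemma CBplus_awf: "f \<in> CBplus e \<Longrightarrow> awf nn f"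
  by (induct rule: CBplus.induct) (auto simp: aeta_def amu_def)

lemma ABP_base: "a \<in> CBplus e \<Longrightarrow> b \<in> CBplus e \<Longrightarrow> adom a = adom b \<Longrightarrow> k = acod b \<Longrightarrow> l = acod a \<Longrightarrow>
  acomp nn a (astar nn b) \<in> lspan nn ABP k l"
  by (rule lspan.base) (auto simp: ABP_def)

lemma step4: "f \<in> CB e \<Longrightarrow> f \<in> lspan nn ABP (adom f) (acod f)"
proof (induct rule: CB.induct)
  case eta
  have "acomp nn ETA (astar nn (aid nn 0)) \<in> lspan nn ABP (adom ETA) (acod ETA)"
    by (rule ABP_base) (auto intro: CBplus.eta CBplus.id0)
  thus ?case by (simp add: astar_id acomp_id_right)
next
  case mu
  have "acomp nn (aid nn 1) (astar nn MUS) \<in> lspan nn ABP (adom MU) (acod MU)"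
    by (rule ABP_base) (auto intro: CBplus.mu_star aid_CBplus)
  thus ?case by (simp add: astar_astar acomp_id_left)
next
  case eta_star
  have "acomp nn (aid nn 0) (astar nn ETA) \<in> lspan nn ABP (adom (astar nn ETA)) (acod (astar nn ETA))"
    by (rule ABP_base) (auto intro: CBplus.eta CBplus.id0)
  thus ?case by (simp add: acomp_id_left)
next
  case mu_star
  have "acomp nn MUS (astar nn (aid nn 1)) \<in> lspan nn ABP (adom MUS) (acod MUS)"
    by (rule ABP_base) (auto intro: CBplus.mu_star aid_CBplus)
  thus ?case by (simp add: astar_id acomp_id_right)
next
  case (ident m)
  have "acomp nn (aid nn m) (astar nn (aid nn m)) \<in> lspan nn ABP m m"
    by (rule ABP_base) (auto intro: aid_CBplus)
  thus ?case by (simp add: astar_id acomp_id_right)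
next
  case (comp f g)
  have "acomp nn g f \<in> lspan nn ABP (adom f) (acod g)"
  proof (rule lspan_right[OF comp(4)])
    show "acod f = adom g" using comp by simp
  next
    fix z assume z: "z \<in> ABP" "adom z = adom g" "acod z = acod g" "awf nn z"
    then obtain a b where ab: "z = acomp nn a (astar nn b)" "a \<in> CBplus e" "b \<in> CBplus e" "adom a = adom b"
      unfolding ABP_def by blast
    have tab: "acod b = acod f" "acod a = acod g" using ab z comp by auto
    have "acomp nn z f \<in> lspan nn ABP (adom f) (acod z)"
    proof (rule lspan_left[OF comp(2)])
      show "adom z = acod f" using z comp by simp
    next
      fix z' assume z': "z' \<in> ABP" "adom z' = adom f" "acod z' = acod f" "awf nn z'"
      then obtain c d where cd: "z' = acomp nn c (astar nn d)" "c \<in> CBplus e" "d \<in> CBplus e" "adom c = adom d"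
        unfolding ABP_def by blast
      have tcd: "acod d = adom f" "acod c = acod f" using cd z' by auto
      have e1: "acomp nn z z' = acomp nn (acomp nn a (acomp nn (astar nn b) c)) (astar nn d)"
        using ab cd tab tcd by (simp add: acomp_assoc)
      have bc: "acomp nn (astar nn b) c \<in> lspan nn ABall (adom c) (adom b)"
        by (rule step3[OF ab(3) cd(2)]) (use tab tcd in simp)
      have "acomp nn (acomp nn a (acomp nn (astar nn b) c)) (astar nn d) \<in> lspan nn ABP (adom (astar nn d)) (acod a)"
      proof (rule lspan_comp[OF bc])
        show "adom a = adom b" by (rule ab(4))
        show "acod (astar nn d) = adom c" using cd by simp
      next
        fix u assume u: "u \<in> ABall" "adom u = adom c" "acod u = adom b" "awf nn u"
        then obtain x y where xy: "u = acomp nn x (astar nn y)" "x \<in> EWall" "y \<in> EWall" "adom x = adom y"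
          unfolding ABall_def by blast
        obtain i where i: "EW i x" using xy unfolding EWall_def by blast
        obtain j where j: "EW j y" using xy unfolding EWall_def by blast
        have txy: "acod y = adom c" "acod x = adom b" using u xy by auto
        have e2: "acomp nn (acomp nn a u) (astar nn d) = acomp nn (acomp nn a x) (astar nn (acomp nn d y))"
          using xy txy cd by (simp add: acomp_assoc astar_comp)
        have "acomp nn (acomp nn a x) (astar nn (acomp nn d y)) \<in> lspan nn ABP (acod (acomp nn d y)) (acod (acomp nn a x))"
          by (rule ABP_base) (use ab cd xy txy EW_CBplus[OF i] EW_CBplus[OF j] in \<open>auto intro: CBplus.comp\<close>)
        thus "acomp nn (acomp nn a u) (astar nn d) \<in> lspan nn ABP (adom (astar nn d)) (acod a)"
          unfolding e2 by simp
      qed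
      thus "acomp nn z z' \<in> lspan nn ABP (adom f) (acod z)"
        unfolding e1 using tcd ab by simp
    qed
    thus "acomp nn z f \<in> lspan nn ABP (adom f) (acod g)" using z by simp
  qed
  thus ?case by simp
next
  case (tens f g)
  have "atens nn f g \<in> lspan nn ABP (adom f + adom g) (acod f + acod g)"
  proof (rule lspan_tens_left[OF tens(2)])
    fix z assume z: "z \<in> ABP" "adom z = adom f" "acod z = acod f" "awf nn z"
    then obtain a b where ab: "z = acomp nn a (astar nn b)" "a \<in> CBplus e" "b \<in> CBplus e" "adom a = adom b"
      unfolding ABP_def by blast
    have "atens nn z g \<in> lspan nn ABP (adom z + adom g) (acod z + acod g)"
    proof (rule lspan_tens_right[OF tens(4)])
      fix z' assume z': "z' \<in> ABP" "adom z' = adom g" "acod z' = acod g" "awf nn z'"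
      then obtain c d where cd: "z' = acomp nn c (astar nn d)" "c \<in> CBplus e" "d \<in> CBplus e" "adom c = adom d"
        unfolding ABP_def by blast
      have e1: "atens nn z z' = acomp nn (atens nn a c) (astar nn (atens nn b d))"
        using ab cd by (simp add: interchange astar_tens)
      have "acomp nn (atens nn a c) (astar nn (atens nn b d)) \<in> lspan nn ABP (acod (atens nn b d)) (acod (atens nn a c))"
        by (rule ABP_base) (use ab cd in \<open>auto intro: CBplus.tens\<close>)
      thus "atens nn z z' \<in> lspan nn ABP (adom z + adom g) (acod z + acod g)"
        unfolding e1 using ab cd z' by simp
    qed
    thus "atens nn z g \<in> lspan nn ABP (adom f + adom g) (acod f + acod g)" using z by simp
  qed
  thus ?case by simp
next
  case (zero k l) thus ?case by (simp add: lspan.zero)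
next
  case (add f g) thus ?case by (simp add: lspan.add)
next
  case (scale f c) thus ?case by (simp add: lspan.scale)
qed

end

theorem lemma3p1:
  fixes B :: "('N::finite) cmat set" and e :: "'N cmat list"
  assumes "fd_cstar_alg B"
    and "onb B e"
    and "length e \<ge> 4"
  shows "\<forall>f \<in> CB e. \<exists>xs.
           (\<forall>(c, a, b) \<in> set xs. a \<in> CBplus e \<and> b \<in> CBplus e \<and> adom a = adom b
               \<and> acod a = acod f \<and> acod b = adom f)
           \<and> f = lin_comb_ab (length e) (adom f) (acod f) xs"
proof
  fix f assume f: "f \<in> CB e"
  interpret fb B e using assms by unfold_locales auto
  have "f \<in> lspan (length e) ABP (adom f) (acod f)" by (rule step4[OF f])
  hence "f \<in> lspan (length e) {acomp (length e) a (astar (length e) b) | a b. a \<in> CBplus e \<and> b \<in> CBplus e \<and> adom a = adom b} (adom f) (acod f)"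
    by (simp add: ABP_def)
  from lspan_to_list[OF this] show "\<exists>xs.
           (\<forall>(c, a, b) \<in> set xs. a \<in> CBplus e \<and> b \<in> CBplus e \<and> adom a = adom b
               \<and> acod a = acod f \<and> acod b = adom f)
           \<and> f = lin_comb_ab (length e) (adom f) (acod f) xs" by simp
qed


end
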